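(* Let $\sigma=\begin{pmatrix}0&1&0\\0&0&1\\1&0&0\end{pmatrix}$ and $\tau=\begin{pmatrix}-1&1&0\\ i&i&0\\0&0&1-i\end{pmatrix}$, viewed in $PGU_3(\mathbb{Z}[1/2])$. Then the group $\Lambda_2=\langle\sigma,\tau\rangle$ acts simply-transitively on the edges of the $3$-regular Bruhat–Tits tree of $PGU_3(\mathbb{Q}_2)$, and $\Lambda_2=\langle\sigma,\tau\mid\sigma^3,\tau^3\rangle\cong\mathbb{Z}/3\mathbb{Z}*\mathbb{Z}/3\mathbb{Z}$.
   Context: For a commutative ring $R$, $PGU_3(R)=\{g\in GL_3(R[\sqrt{-1}]) : gg^*=\lambda I,\ \lambda\in R^\times\}/R[\sqrt{-1}]^\times$, $g^*$ the conjugate transpose. The Bruhat–Tits building of $PGU_3(\mathbb{Q}_2)$ is a $3$-regular tree. *)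

theory Defs
  imports "HOL-Analysis.Analysis"
begin

section \<open>Rings: Z[1/2], Z[i], Z[1/2][i] inside the complex numbers\<close>

definition dyadic :: "real set" where
  "dyadic = {of_int a / 2 ^ k | a k. True}"

definition unitZh :: "real \<Rightarrow> bool" where
  "unitZh l \<longleftrightarrow> l \<in> dyadic \<and> l \<noteq> 0 \<and> inverse l \<in> dyadic"

definition Gint :: "complex set" where
  "Gint = {Complex (of_int a) (of_int b) | a b. True}"

definition Dg :: "complex set" where
  "Dg = {z. Re z \<in> dyadic \<and> Im z \<in> dyadic}"

definition unitDg :: "complex \<Rightarrow> bool" where
  "unitDg u \<longleftrightarrow> u \<in> Dg \<and> u \<noteq> 0 \<and> inverse u \<in> Dg"

section \<open>GU_3(Z[1/2]) and PGU_3(Z[1/2])\<close>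

type_synonym cmat = "complex^3^3"
type_synonym cvec = "complex^3"

definition mstar :: "cmat \<Rightarrow> cmat" where
  "mstar g = (\<chi> i j. cnj (g $ j $ i))"

definition GU3 :: "cmat set" where
  "GU3 = {g. (\<forall>i j. g $ i $ j \<in> Dg) \<and>
              (\<exists>l. unitZh l \<and> g ** mstar g = mat (complex_of_real l))}"

text \<open>Equality in PGU_3: equality up to a unit scalar of Z[1/2][i].\<close>
definition pgu_eq :: "cmat \<Rightarrow> cmat \<Rightarrow> bool" where
  "pgu_eq g h \<longleftrightarrow> (\<exists>u. unitDg u \<and> h = mat u ** g)"

definition pgu_trivial :: "cmat \<Rightarrow> bool" where
  "pgu_trivial g \<longleftrightarrow> (\<exists>u. unitDg u \<and> g = mat u)"

section \<open>The Bruhat--Tits tree via lattices\<close>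

definition Ovec :: "cvec set" where
  "Ovec = {x. \<forall>i. x $ i \<in> Gint}"

definition scaleset :: "complex \<Rightarrow> cvec set \<Rightarrow> cvec set" where
  "scaleset c L = (\<lambda>x. c *s x) ` L"

text \<open>Z[i]-lattices in Z[1/2][i]^3 of full rank (these correspond bijectively to
  Z_2[i]-lattices in Q_2(i)^3).\<close>
definition is_lattice :: "cvec set \<Rightarrow> bool" where
  "is_lattice L \<longleftrightarrow> 0 \<in> L \<and> (\<forall>x\<in>L. \<forall>y\<in>L. x + y \<in> L) \<and>
     (\<forall>a\<in>Gint. \<forall>x\<in>L. a *s x \<in> L) \<and>
     (\<exists>n::nat. scaleset (2 ^ n) Ovec \<subseteq> L \<and> L \<subseteq> scaleset (1 / 2 ^ n) Ovec)"

definition hform :: "cvec \<Rightarrow> cvec \<Rightarrow> complex" where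
  "hform x y = (\<Sum>i\<in>UNIV. x $ i * cnj (y $ i))"

definition dual :: "cvec set \<Rightarrow> cvec set" where
  "dual L = {y. \<forall>x\<in>L. hform x y \<in> Gint}"

definition unif :: complex where
  "unif = 1 - \<i>"

text \<open>Edges (= chambers) of the Bruhat--Tits tree of PGU_3(Q_2): pairs (L0, M) with
  L0 self-dual and M/(pi L0) an isotropic line in L0/(pi L0); equivalently the
  duality-stable chambers {L0, M, pi M^#} of the building of GL_3(Q_2(i)).\<close>
definition BT_edges :: "(cvec set \<times> cvec set) set" where
  "BT_edges = {(L0, M). is_lattice L0 \<and> is_lattice M \<and> dual L0 = L0 \<and> M \<subseteq> L0 \<and>
      scaleset unif L0 \<subset> M \<and> M \<subset> scaleset unif (dual M)}"

text \<open>Action of g in GU_3 (with g g^* = l I) on lattices: L \<mapsto> c g L, where c is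
  a scalar of Z[1/2][i] with |c|^2 l = 1 (unique up to a power of i), so that
  self-dual lattices go to self-dual lattices.\<close>
definition gscale :: "cmat \<Rightarrow> complex" where
  "gscale g = (SOME c. c \<in> Dg \<and>
      (\<exists>l. g ** mstar g = mat (complex_of_real l) \<and> (cmod c)\<^sup>2 * l = 1))"

definition act_lat :: "cmat \<Rightarrow> cvec set \<Rightarrow> cvec set" where
  "act_lat g L = (\<lambda>x. gscale g *s (g *v x)) ` L"

definition act_edge :: "cmat \<Rightarrow> cvec set \<times> cvec set \<Rightarrow> cvec set \<times> cvec set" where
  "act_edge g e = (act_lat g (fst e), act_lat g (snd e))"

section \<open>The elements sigma3, tau3 and the group Lambda_2\<close>

definition sigma3 :: cmat where
  "sigma3 = vector [vector [0, 1, 0], vector [0, 0, 1], vector [1, 0, 0]]"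

definition tau3 :: cmat where
  "tau3 = vector [vector [-1, 1, 0], vector [\<i>, \<i>, 0], vector [0, 0, 1 - \<i>]]"

text \<open>Preimage of Lambda_2 = <sigma3, tau3> in GL_3: products of sigma3, tau3 and their
  inverses, times unit scalars.\<close>
definition Lam2 :: "cmat set" where
  "Lam2 = {mat u ** foldr (**) ws (mat 1) | u ws. unitDg u \<and>
             set ws \<subseteq> {sigma3, tau3, matrix_inv sigma3, matrix_inv tau3}}"

fun mpow :: "cmat \<Rightarrow> nat \<Rightarrow> cmat" where
  "mpow g 0 = mat 1"
| "mpow g (Suc n) = g ** mpow g n"

text \<open>Words in normal form for Z/3 * Z/3: letters (True,k) = sigma3^k, (False,k) = tau3^k,
  k \<in> {1,2}, consecutive letters from different factors.\<close>
definition alt_word :: "(bool \<times> nat) list \<Rightarrow> bool" where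
  "alt_word w \<longleftrightarrow> (\<forall>l\<in>set w. snd l \<in> {1, 2}) \<and>
     (\<forall>i. Suc i < length w \<longrightarrow> fst (w ! i) \<noteq> fst (w ! Suc i))"

fun word_mat :: "(bool \<times> nat) list \<Rightarrow> cmat" where
  "word_mat [] = mat 1"
| "word_mat ((b, k) # w) = mpow (if b then sigma3 else tau3) k ** word_mat w"

end

theory Submission
  imports Defs
begin



definition gi :: "int \<Rightarrow> int \<Rightarrow> complex" where
  "gi a b = Complex (of_int a) (of_int b)"

lemma Gint_gi: "z \<in> Gint \<longleftrightarrow> (\<exists>a b. z = gi a b)"
  by (auto simp: Gint_def gi_def)

lemma gi_in[simp]: "gi a b \<in> Gint" by (auto simp: Gint_gi)

lemma GintE: assumes "z \<in> Gint" obtains a b where "z = gi a b"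
  using assms by (auto simp: Gint_gi)

lemma gi_add: "gi a b + gi c d = gi (a+c) (b+d)" by (simp add: gi_def complex_eq_iff)
lemma gi_diff: "gi a b - gi c d = gi (a-c) (b-d)" by (simp add: gi_def complex_eq_iff)
lemma gi_uminus: "- gi a b = gi (-a) (-b)" by (simp add: gi_def complex_eq_iff)
lemma gi_mult: "gi a b * gi c d = gi (a*c - b*d) (a*d + b*c)" by (simp add: gi_def complex_eq_iff)
lemma gi_cnj: "cnj (gi a b) = gi a (-b)" by (simp add: gi_def complex_eq_iff)
lemma gi_eq_iff: "gi a b = gi c d \<longleftrightarrow> a = c \<and> b = d" by (simp add: gi_def complex_eq_iff)
lemma gi_consts: "0 = gi 0 0" "1 = gi 1 0" "\<i> = gi 0 1" "2 = gi 2 0" "1 - \<i> = gi 1 (-1)" "1 + \<i> = gi 1 1"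
  by (simp_all add: gi_def complex_eq_iff)

lemma Gint_add[simp]: "a \<in> Gint \<Longrightarrow> b \<in> Gint \<Longrightarrow> a + b \<in> Gint"
  by (auto simp: gi_add elim!: GintE)
lemma Gint_diff[simp]: "a \<in> Gint \<Longrightarrow> b \<in> Gint \<Longrightarrow> a - b \<in> Gint"
  by (auto simp: gi_diff elim!: GintE)
lemma Gint_mult[simp]: "a \<in> Gint \<Longrightarrow> b \<in> Gint \<Longrightarrow> a * b \<in> Gint"
  by (auto simp: gi_mult elim!: GintE)
lemma Gint_uminus[simp]: "a \<in> Gint \<Longrightarrow> - a \<in> Gint"
  by (auto simp: gi_uminus elim!: GintE)
lemma Gint_cnj[simp]: "a \<in> Gint \<Longrightarrow> cnj a \<in> Gint"
  by (auto simp: gi_cnj elim!: GintE)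
lemma Gint_consts[simp]: "0 \<in> Gint" "1 \<in> Gint" "\<i> \<in> Gint" "2 \<in> Gint" "1 - \<i> \<in> Gint" "1 + \<i> \<in> Gint"
  by (metis gi_in gi_consts)+
lemma Gint_power[simp]: "a \<in> Gint \<Longrightarrow> a ^ n \<in> Gint"
  by (induct n) auto

definition pb :: "complex \<Rightarrow> bool" where
  "pb z \<longleftrightarrow> (\<exists>a b. z = gi a b \<and> odd (a+b))"

lemma pb_gi[simp]: "pb (gi a b) \<longleftrightarrow> odd (a+b)"
  by (auto simp: pb_def gi_eq_iff)

definition d2 :: "complex \<Rightarrow> bool" where
  "d2 z \<longleftrightarrow> (\<exists>w\<in>Gint. z = 2 * w)"

lemma d2_gi: "d2 (gi a b) \<longleftrightarrow> even a \<and> even b"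
proof
  assume "d2 (gi a b)"
  then obtain c d where "gi a b = 2 * gi c d" by (auto simp: d2_def Gint_gi)
  then have "gi a b = gi (2*c) (2*d)" by (simp add: gi_consts(4) gi_mult)
  then show "even a \<and> even b" by (simp add: gi_eq_iff)
next
  assume "even a \<and> even b"
  then obtain c d where "a = 2*c" "b = 2*d" by (metis evenE)
  then have "gi a b = 2 * gi c d" by (simp add: gi_consts(4) gi_mult)
  then show "d2 (gi a b)" by (auto simp: d2_def)
qed

lemma pb_add: "a \<in> Gint \<Longrightarrow> b \<in> Gint \<Longrightarrow> pb (a + b) \<longleftrightarrow> pb a \<noteq> pb b"
  by (auto simp: gi_add elim!: GintE)
lemma pb_diff: "a \<in> Gint \<Longrightarrow> b \<in> Gint \<Longrightarrow> pb (a - b) \<longleftrightarrow> pb a \<noteq> pb b"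
  by (auto simp: gi_diff elim!: GintE)
lemma pb_uminus: "a \<in> Gint \<Longrightarrow> pb (- a) \<longleftrightarrow> pb a"
  by (auto simp: gi_uminus elim!: GintE)
lemma pb_mult: "a \<in> Gint \<Longrightarrow> b \<in> Gint \<Longrightarrow> pb (a * b) \<longleftrightarrow> pb a \<and> pb b"
  by (auto simp: gi_mult elim!: GintE)
lemma pb_cnj: "a \<in> Gint \<Longrightarrow> pb (cnj a) \<longleftrightarrow> pb a"
  by (auto simp: gi_cnj elim!: GintE)
lemma pb_consts: "\<not> pb 0" "pb 1" "pb \<i>" "\<not> pb (1 - \<i>)" "\<not> pb 2" "\<not> pb (1 + \<i>)"
proof -
  have "pb (gi 1 0)" "pb (gi 0 1)" "\<not> pb (gi 0 0)" "\<not> pb (gi 1 (-1))" "\<not> pb (gi 2 0)" "\<not> pb (gi 1 1)"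
    by simp_all
  then show "\<not> pb 0" "pb 1" "pb \<i>" "\<not> pb (1 - \<i>)" "\<not> pb 2" "\<not> pb (1 + \<i>)"
    by (simp_all only: gi_consts[symmetric]) simp_all
qed

lemma nopb_iff: "a \<in> Gint \<Longrightarrow> \<not> pb a \<longleftrightarrow> (\<exists>w\<in>Gint. a = (1 - \<i>) * w)"
proof
  assume "a \<in> Gint" "\<not> pb a"
  then obtain x y where a: "a = gi x y" "even (x+y)" by (auto simp: Gint_gi)
  then obtain m where m: "x + y = 2*m" by (metis evenE)
  have "a = (1 - \<i>) * gi (x - m) m"
    using m by (simp add: a gi_consts(5) gi_mult gi_eq_iff)
  then show "\<exists>w\<in>Gint. a = (1 - \<i>) * w" by auto
next
  assume "a \<in> Gint" "\<exists>w\<in>Gint. a = (1 - \<i>) * w"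
  then show "\<not> pb a" by (auto simp: pb_mult pb_consts)
qed

lemma d2_nopb: "d2 z \<Longrightarrow> z \<in> Gint \<and> \<not> pb z"
  by (auto simp: d2_def pb_mult pb_consts)

lemma d2_add: "d2 a \<Longrightarrow> d2 b \<Longrightarrow> d2 (a + b)"
  by (auto simp: d2_def) (metis Gint_add distrib_left)




lemma dyadic_iff: "x \<in> dyadic \<longleftrightarrow> (\<exists>a k. x = of_int a / 2 ^ k)"
  by (auto simp: dyadic_def)

lemma dyadic_int[simp]: "of_int a \<in> dyadic"
  unfolding dyadic_iff by (rule exI[of _ a], rule exI[of _ 0]) simp

lemma dyadic_common:
  assumes "x \<in> dyadic" "y \<in> dyadic"
  obtains a b k where "x = of_int a / 2 ^ k" "y = of_int b / 2 ^ k"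
proof -
  obtain a k b l where x: "x = of_int a / 2 ^ k" and y: "y = of_int b / 2 ^ l"
    using assms by (auto simp: dyadic_iff)
  have "x = of_int (a * 2 ^ l) / 2 ^ (k + l)"
    by (simp add: x power_add)
  moreover have "y = of_int (b * 2 ^ k) / 2 ^ (k + l)"
    by (simp add: y power_add)
  ultimately show ?thesis using that by blast
qed

lemma dyadic_add[simp]: "x \<in> dyadic \<Longrightarrow> y \<in> dyadic \<Longrightarrow> x + y \<in> dyadic"
proof -
  assume "x \<in> dyadic" "y \<in> dyadic"
  then obtain a b k where "x = of_int a / 2 ^ k" "y = of_int b / 2 ^ k" by (rule dyadic_common)
  then have "x + y = of_int (a + b) / 2 ^ k" by (simp add: add_divide_distrib)
  then show ?thesis unfolding dyadic_iff by blast
qed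

lemma dyadic_mult[simp]: "x \<in> dyadic \<Longrightarrow> y \<in> dyadic \<Longrightarrow> x * y \<in> dyadic"
proof -
  assume "x \<in> dyadic" "y \<in> dyadic"
  then obtain a k b l where "x = of_int a / 2 ^ k" "y = of_int b / 2 ^ l" by (auto simp: dyadic_iff)
  then have "x * y = of_int (a * b) / 2 ^ (k + l)" by (simp add: power_add)
  then show ?thesis unfolding dyadic_iff by blast
qed

lemma dyadic_uminus[simp]: "x \<in> dyadic \<Longrightarrow> - x \<in> dyadic"
proof -
  assume "x \<in> dyadic"
  then obtain a k where "x = of_int a / 2 ^ k" by (auto simp: dyadic_iff)
  then have "- x = of_int (- a) / 2 ^ k" by simp
  then show ?thesis unfolding dyadic_iff by blast
qed

lemma dyadic_half[simp]: "1/2 \<in> dyadic" "0 \<in> dyadic" "1 \<in> dyadic"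
proof -
  have "(1::real)/2 = of_int 1 / 2 ^ 1" by simp
  then show "1/2 \<in> dyadic" unfolding dyadic_iff by blast
  show "0 \<in> dyadic" "1 \<in> dyadic" using dyadic_int[of 0] dyadic_int[of 1] by simp_all
qed

lemma Dg_add[simp]: "a \<in> Dg \<Longrightarrow> b \<in> Dg \<Longrightarrow> a + b \<in> Dg"
  unfolding Dg_def by simp
lemma Dg_mult[simp]: "a \<in> Dg \<Longrightarrow> b \<in> Dg \<Longrightarrow> a * b \<in> Dg"
proof -
  assume a: "a \<in> Dg" and b: "b \<in> Dg"
  have "Re a * Re b + - (Im a * Im b) \<in> dyadic" "Re a * Im b + Im a * Re b \<in> dyadic"
    using a b unfolding Dg_def by (simp_all only: mem_Collect_eq dyadic_add dyadic_mult dyadic_uminus)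
  then show ?thesis unfolding Dg_def by simp
qed
lemma Dg_uminus[simp]: "a \<in> Dg \<Longrightarrow> - a \<in> Dg" unfolding Dg_def by simp
lemma Dg_cnj[simp]: "a \<in> Dg \<Longrightarrow> cnj a \<in> Dg" unfolding Dg_def by simp
lemma Dg_1[simp]: "1 \<in> Dg" unfolding Dg_def by simp
lemma Dg_power[simp]: "a \<in> Dg \<Longrightarrow> a ^ n \<in> Dg"
  by (induct n) (simp_all only: power_0 power_Suc Dg_1 Dg_mult)
lemma Gint_Dg: "a \<in> Gint \<Longrightarrow> a \<in> Dg"
  by (auto simp: Dg_def gi_def elim!: GintE)
lemma pinv_Dg[simp]: "(1 + \<i>) / 2 \<in> Dg"
  unfolding Dg_def by simp

lemma sq_mod4: "(A::int)^2 mod 4 = (if even A then 0 else 1)"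
proof (cases "even A")
  case True
  then obtain p where "A = 2*p" by (metis evenE)
  then have "A^2 = 4*(p*p)" by (simp add: power2_eq_square)
  then show ?thesis using True by simp
next
  case False
  then obtain p where "A = 2*p+1" by (metis oddE)
  then have e: "A^2 = 4*(p*p+p) + 1" by (simp add: power2_eq_square algebra_simps)
  have "(4*(p*p+p) + 1) mod 4 = (1::int)" by presburger
  then show ?thesis using False e by simp
qed

lemma sq_sum_4: "(A::int)^2 + B^2 = 4 * C \<Longrightarrow> even A \<and> even B"
proof -
  assume h: "A^2 + B^2 = 4 * C"
  have "(A^2 + B^2) mod 4 = 0" using h by simp
  then have "(A^2 mod 4 + B^2 mod 4) mod 4 = 0" by (simp add: mod_add_eq)
  then show ?thesis unfolding sq_mod4 by (auto split: if_splits)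
qed

lemma sq_sum_pow4: "(A::int)^2 + B^2 = 4 ^ m \<Longrightarrow> 2 ^ m dvd A \<and> 2 ^ m dvd B"
proof (induct m arbitrary: A B)
  case 0
  then show ?case by simp
next
  case (Suc m)
  then have "even A \<and> even B" using sq_sum_4[of A B "4^m"] by simp
  then obtain A' B' where AB: "A = 2*A'" "B = 2*B'" by (metis evenE)
  then have "A'^2 + B'^2 = 4^m" using Suc.prems by (simp add: power2_eq_square)
  then have "2 ^ m dvd A' \<and> 2 ^ m dvd B'" by (rule Suc.hyps)
  then show ?case using AB by auto
qed

lemma Dg_norm1_Gint:
  assumes "z \<in> Dg" "cmod z = 1"
  shows "z \<in> Gint"
proof -
  obtain a b k where re: "Re z = of_int a / 2 ^ k" and im: "Im z = of_int b / 2 ^ k"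
    using assms(1) unfolding Dg_def by (auto elim: dyadic_common)
  have "(Re z)^2 + (Im z)^2 = 1" using assms(2) by (simp add: cmod_def)
  then have "(of_int a :: real)^2 + (of_int b)^2 = ((2::real)^k)^2" using re im by (simp add: field_simps power_divide)
  moreover have "((2::real)^k)^2 = of_int (4^k)"
    by (simp add: power_mult[symmetric] mult.commute[of k 2] power_mult)
  ultimately have "(of_int (a^2 + b^2) :: real) = of_int (4^k)" by simp
  then have "a^2 + b^2 = 4^k" by (simp only: of_int_eq_iff)
  then have "2^k dvd a \<and> 2^k dvd b" by (rule sq_sum_pow4)
  then obtain a' b' where "a = 2^k * a'" "b = 2^k * b'" by (auto elim!: dvdE)
  then have "z = gi a' b'" using re im by (simp add: gi_def complex_eq_iff)
  then show ?thesis by simp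
qed

lemma unitDg_mult: "unitDg a \<Longrightarrow> unitDg b \<Longrightarrow> unitDg (a * b)"
  by (auto simp: unitDg_def)
lemma unitDg_inverse: "unitDg a \<Longrightarrow> unitDg (inverse a)"
  by (auto simp: unitDg_def)
lemma unitDg_1: "unitDg 1"
  by (auto simp: unitDg_def intro: Gint_Dg)
lemma unitDg_pi: "unitDg (1 - \<i>)" "unitDg ((1 + \<i>)/2)"
proof -
  have i1: "inverse (1 - \<i>) = (1 + \<i>)/2" by (simp add: complex_eq_iff inverse_complex.code)
  have i2: "inverse ((1 + \<i>)/2) = 1 - \<i>" by (simp add: complex_eq_iff inverse_complex.code power2_eq_square)
  have "1 - \<i> \<in> Dg" by (rule Gint_Dg) simp
  moreover have "1 - \<i> \<noteq> 0" "(1 + \<i>)/2 \<noteq> 0" by (simp_all add: complex_eq_iff)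
  ultimately show "unitDg (1 - \<i>)" "unitDg ((1 + \<i>)/2)"
    unfolding unitDg_def i1 i2 by simp_all
qed
lemma unitDg_power: "unitDg a \<Longrightarrow> unitDg (a ^ n)"
  by (induct n) (auto intro: unitDg_mult unitDg_1)




lemma mat_eq3: "(A::'a^3^3) = B \<longleftrightarrow> A$1$1 = B$1$1 \<and> A$1$2 = B$1$2 \<and> A$1$3 = B$1$3 \<and>
   A$2$1 = B$2$1 \<and> A$2$2 = B$2$2 \<and> A$2$3 = B$2$3 \<and> A$3$1 = B$3$1 \<and> A$3$2 = B$3$2 \<and> A$3$3 = B$3$3"
  by (auto simp: vec_eq_iff forall_3)
lemma vec_eq3: "(x::'a^3) = y \<longleftrightarrow> x$1 = y$1 \<and> x$2 = y$2 \<and> x$3 = y$3"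
  by (auto simp: vec_eq_iff forall_3)
lemma mul_nth: "((A::'a::semiring_1^3^3) ** B)$i$j = A$i$1*B$1$j + A$i$2*B$2$j + A$i$3*B$3$j"
  by (simp add: matrix_matrix_mult_def sum_3)
lemma mv_nth: "((A::'a::semiring_1^3^3) *v x)$i = A$i$1*x$1 + A$i$2*x$2 + A$i$3*x$3"
  by (simp add: matrix_vector_mult_def sum_3)
lemma mat_nth: "(mat c :: 'a::zero^'n^'n) $ i $ j = (if i = j then c else 0)"
  by (simp add: mat_def)
lemma mstar_nth: "mstar A $ i $ j = cnj (A $ j $ i)"
  by (simp add: mstar_def)
lemma smult_nth: "(c *s x) $ i = c * x $ i" by simp
lemma hform3: "hform x y = x$1 * cnj (y$1) + x$2 * cnj (y$2) + x$3 * cnj (y$3)"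
  by (simp add: hform_def sum_3)

definition Tm :: cmat where
  "Tm = vector [vector [-(1+\<i>)/2, (1+\<i>)/2, 0], vector [(\<i>-1)/2, (\<i>-1)/2, 0], vector [0, 0, 1]]"

lemmas mat_simps = mat_eq3 mul_nth mat_nth mstar_nth Tm_def sigma3_def tau3_def

lemma mpow1: "mpow g 1 = g" by simp
lemma mpow2: "mpow g 2 = g ** g" by (simp add: numeral_2_eq_2)
lemma mpow3: "mpow g 3 = g ** g ** g" by (simp add: numeral_3_eq_3 matrix_mul_assoc)

lemma S3: "mpow sigma3 3 = mat 1"
  unfolding mpow3 by (simp add: mat_simps)
lemma T3: "mpow Tm 3 = mat 1"
  unfolding mpow3 by (simp add: mat_simps field_simps complex_eq_iff)
lemma S_unit: "sigma3 ** mstar sigma3 = mat 1" "mstar sigma3 ** sigma3 = mat 1"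
  by (simp_all add: mat_simps)
lemma T_unit: "Tm ** mstar Tm = mat 1" "mstar Tm ** Tm = mat 1"
  by (simp_all add: mat_simps field_simps complex_eq_iff)
lemma tau3_eq: "tau3 = mat (1 - \<i>) ** Tm"
  by (simp add: mat_simps field_simps complex_eq_iff)

lemma mpow_add: "mpow g (a + b) = mpow g a ** mpow g b"
  by (induct a) (simp_all add: matrix_mul_assoc)

lemma mpow_mult3: "mpow g 3 = mat 1 \<Longrightarrow> mpow g (3 * q) = mat 1"
  by (induct q) (simp_all add: mpow_add)

lemma mpow_mod3: "mpow g 3 = mat 1 \<Longrightarrow> mpow g k = mpow g (k mod 3)"
proof -
  assume h: "mpow g 3 = mat 1"
  have "mpow g k = mpow g (3 * (k div 3) + k mod 3)" by simp
  also have "\<dots> = mpow g (3 * (k div 3)) ** mpow g (k mod 3)" by (rule mpow_add)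
  finally show ?thesis using mpow_mult3[OF h] by simp
qed

lemma mstar_mult: "mstar (A ** B) = mstar B ** mstar A"
  by (simp add: mstar_def matrix_matrix_mult_def vec_eq_iff mult.commute)
lemma mstar_mat: "mstar (mat c) = mat (cnj c)"
  by (simp add: mstar_def mat_def vec_eq_iff)
lemma mstar_mstar: "mstar (mstar A) = A"
  by (simp add: mstar_def vec_eq_iff)
lemma mat_mult_left: "(mat a :: 'a::semiring_1^'n^'n) ** B = (\<chi> i j. a * B$i$j)"
  unfolding matrix_matrix_mult_def mat_def
  by (auto simp: vec_eq_iff if_distrib if_distribR sum.delta'[OF finite] cong: if_cong)
lemma mat_mult_right: "(B :: 'a::semiring_1^'n^'n) ** mat a = (\<chi> i j. B$i$j * a)"
  unfolding matrix_matrix_mult_def mat_def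
  by (auto simp: vec_eq_iff if_distrib if_distribR sum.delta'[OF finite] cong: if_cong)
lemma mat_mult_mat: "(mat a :: 'a::semiring_1^'n^'n) ** mat b = mat (a * b)"
  unfolding mat_mult_left by (simp add: mat_def vec_eq_iff)
lemma mat_comm: "(mat a :: cmat) ** (B::cmat) = B ** mat a"
  by (simp add: mat_eq3 mul_nth mat_nth mult.commute)
lemma mat_mv: "(mat a :: 'a::semiring_1^'n^'n) *v x = a *s x"
  unfolding matrix_vector_mult_def mat_def
  by (auto simp: vec_eq_iff if_distrib if_distribR sum.delta'[OF finite] cong: if_cong)
lemma mv_smult: "(A :: 'a::comm_semiring_1^'n^'m) *v (c *s x) = c *s (A *v x)"
  by (simp add: matrix_vector_mult_def vec_eq_iff sum_distrib_left mult.left_commute)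
lemma mat_inj: "(mat a :: 'a::zero^'n^'n) = mat b \<Longrightarrow> a = b"
  by (metis mat_nth)

definition Uset :: "cmat set" where
  "Uset = {U. U ** mstar U = mat 1 \<and> mstar U ** U = mat 1}"

lemma Uset_mult: "U \<in> Uset \<Longrightarrow> V \<in> Uset \<Longrightarrow> U ** V \<in> Uset"
proof -
  assume "U \<in> Uset" "V \<in> Uset"
  then have u: "U ** mstar U = mat 1" "mstar U ** U = mat 1" and v: "V ** mstar V = mat 1" "mstar V ** V = mat 1"
    by (auto simp: Uset_def)
  have "U ** V ** mstar (U ** V) = U ** (V ** mstar V) ** mstar U"
    by (simp add: mstar_mult matrix_mul_assoc)
  also have "\<dots> = mat 1" using u v by simp
  finally have 1: "U ** V ** mstar (U ** V) = mat 1" .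
  have "mstar (U ** V) ** (U ** V) = mstar V ** (mstar U ** U) ** V"
    by (simp add: mstar_mult matrix_mul_assoc)
  also have "\<dots> = mat 1" using u v by simp
  finally show ?thesis using 1 by (simp add: Uset_def)
qed
lemma Uset_1: "mat 1 \<in> Uset" by (simp add: Uset_def mstar_mat)
lemma Uset_S: "sigma3 \<in> Uset" using S_unit by (simp add: Uset_def)
lemma Uset_T: "Tm \<in> Uset" using T_unit by (simp add: Uset_def)
lemma Uset_mpow: "g \<in> Uset \<Longrightarrow> mpow g k \<in> Uset"
  by (induct k) (simp_all add: Uset_1 Uset_mult)

lemma hform_adj: "hform ((A::cmat) *v x) y = hform x (mstar A *v y)"
  by (simp add: hform3 mv_nth mstar_nth algebra_simps)

lemma hform_unitary: "mstar U ** U = mat 1 \<Longrightarrow> hform (U *v x) (U *v y) = hform x y"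
  by (simp add: hform_adj matrix_vector_mul_assoc)
lemma hform_smult: "hform (c *s x) (d *s y) = c * cnj d * hform x y"
  by (simp add: hform3 algebra_simps)

lemma S_mv: "sigma3 *v x = vector [x$2, x$3, x$1]"
  by (simp add: vec_eq3 mv_nth sigma3_def)
lemma SS_mv: "(sigma3 ** sigma3) *v x = vector [x$3, x$1, x$2]"
  by (simp add: vec_eq3 mv_nth mul_nth sigma3_def)
lemma T_mv: "Tm *v x = vector [-(1+\<i>)/2 * x$1 + (1+\<i>)/2 * x$2, (\<i>-1)/2 * x$1 + (\<i>-1)/2 * x$2, x$3]"
  by (simp add: vec_eq3 mv_nth Tm_def)
lemma TT_mv: "(Tm ** Tm) *v x = vector [-(1-\<i>)/2 * x$1 - (1+\<i>)/2 * x$2, (1-\<i>)/2 * x$1 - (1+\<i>)/2 * x$2, x$3]"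
  by (simp add: vec_eq3 mv_nth mul_nth Tm_def field_simps complex_eq_iff)




definition Xm :: "bool \<Rightarrow> cmat" where "Xm b = (if b then sigma3 else Tm)"

lemma X3: "mpow (Xm b) 3 = mat 1" by (simp add: Xm_def S3 T3)
lemma Uset_X: "Xm b \<in> Uset" by (simp add: Xm_def Uset_S Uset_T)

fun Nalt :: "(bool \<times> nat) list \<Rightarrow> cmat" where
  "Nalt [] = mat 1"
| "Nalt ((b, k) # w) = mpow (Xm b) k ** Nalt w"

lemma Nalt_append: "Nalt (w1 @ w2) = Nalt w1 ** Nalt w2"
  by (induct w1 rule: Nalt.induct) (simp_all add: matrix_mul_assoc)

lemma Nalt_Uset: "Nalt w \<in> Uset"
  by (induct w rule: Nalt.induct) (simp_all add: Uset_1 Uset_mult Uset_mpow Uset_X)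

definition winv :: "(bool \<times> nat) list \<Rightarrow> (bool \<times> nat) list" where
  "winv w = rev (map (\<lambda>(b, k). (b, 2 * k)) w)"

lemma inv_Cons: "winv ((b, k) # w) = winv w @ [(b, 2 * k)]"
  by (simp add: winv_def)

lemma Nalt_inv: "Nalt (winv w) ** Nalt w = mat 1"
proof (induct w rule: Nalt.induct)
  case 1
  then show ?case by (simp add: winv_def)
next
  case (2 b k w)
  have "Nalt (winv ((b, k) # w)) ** Nalt ((b, k) # w)
      = Nalt (winv w) ** (mpow (Xm b) (2 * k) ** mpow (Xm b) k) ** Nalt w"
    by (simp add: inv_Cons Nalt_append matrix_mul_assoc)
  also have "mpow (Xm b) (2 * k) ** mpow (Xm b) k = mat 1"
    using mpow_add[of "Xm b" "2*k" k, symmetric] mpow_mult3[OF X3, of b k]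
    by (simp add: mult.commute)
  finally show ?case using 2 by simp
qed

lemma Uset_left_inv: "U \<in> Uset \<Longrightarrow> V ** U = mat 1 \<Longrightarrow> V = mstar U"
proof -
  assume u: "U \<in> Uset" and v: "V ** U = mat 1"
  have "V = V ** (U ** mstar U)" using u by (simp add: Uset_def)
  also have "\<dots> = mstar U" by (simp add: matrix_mul_assoc v)
  finally show ?thesis .
qed

lemma Nalt_inv_mstar: "Nalt (winv w) = mstar (Nalt w)"
  by (rule Uset_left_inv[OF Nalt_Uset Nalt_inv])

lemma Nalt_inv2: "Nalt w ** Nalt (winv w) = mat 1"
  using Nalt_Uset[of w] by (simp add: Nalt_inv_mstar Uset_def)

definition cntT :: "(bool \<times> nat) list \<Rightarrow> nat" where
  "cntT w = sum_list (map (\<lambda>(b, k). if b then 0 else k) w)"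

lemma mpow_tau3: "mpow tau3 k = mat ((1 - \<i>) ^ k) ** mpow Tm k"
proof (induct k)
  case 0 then show ?case by simp
next
  case (Suc k)
  have "mpow tau3 (Suc k) = mat (1 - \<i>) ** Tm ** (mat ((1 - \<i>) ^ k) ** mpow Tm k)"
    using Suc by (simp add: tau3_eq)
  also have "\<dots> = mat (1 - \<i>) ** mat ((1 - \<i>) ^ k) ** (Tm ** mpow Tm k)"
    by (metis mat_comm matrix_mul_assoc)
  finally show ?case by (simp add: mat_mult_mat)
qed

lemma word_mat_eq: "word_mat w = mat ((1 - \<i>) ^ cntT w) ** Nalt w"
proof (induct w rule: Nalt.induct)
  case 1 then show ?case by (simp add: cntT_def)
next
  case (2 b k w)
  show ?case
  proof (cases b)
    case True
    then show ?thesis using 2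
      by (simp add: cntT_def Xm_def) (metis mat_comm matrix_mul_assoc)
  next
    case False
    have "word_mat ((b, k) # w) = mat ((1 - \<i>) ^ k) ** mpow Tm k ** (mat ((1 - \<i>) ^ cntT w) ** Nalt w)"
      using False 2 by (simp add: mpow_tau3)
    also have "\<dots> = mat ((1 - \<i>) ^ k) ** mat ((1 - \<i>) ^ cntT w) ** (mpow Tm k ** Nalt w)"
      by (metis mat_comm matrix_mul_assoc)
    also have "\<dots> = mat ((1 - \<i>) ^ cntT ((b, k) # w)) ** Nalt ((b, k) # w)"
      using False by (simp add: mat_mult_mat cntT_def Xm_def power_add)
    finally show ?thesis .
  qed
qed

definition ws_of :: "(bool \<times> nat) list \<Rightarrow> cmat list" where
  "ws_of w = concat (map (\<lambda>(b, k). replicate k (if b then sigma3 else tau3)) w)"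

lemma foldr_rep_mat: "foldr (**) (replicate k X) Y = mpow X k ** (Y::cmat)"
  by (induct k) (simp_all add: matrix_mul_assoc del: foldr_replicate)

lemma foldr_ws_of: "foldr (**) (ws_of w) (mat 1) = word_mat w"
  by (induct w rule: word_mat.induct) (simp_all add: ws_of_def foldr_rep_mat del: foldr_replicate)

lemma set_ws_of: "set (ws_of w) \<subseteq> {sigma3, tau3, matrix_inv sigma3, matrix_inv tau3}"
  by (auto simp: ws_of_def split: if_splits)

lemma word_mat_Lam2: "word_mat w \<in> Lam2"
  unfolding Lam2_def
  by (rule CollectI, rule exI[of _ 1], rule exI[of _ "ws_of w"])
     (simp add: foldr_ws_of set_ws_of unitDg_1)

lemma comm_assoc: "(A::cmat) ** (mat c ** B) = mat c ** (A ** B)"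
proof -
  have "A ** (mat c ** B) = (A ** mat c) ** B" by (rule matrix_mul_assoc)
  also have "A ** mat c = mat c ** A" by (rule mat_comm[symmetric])
  finally show ?thesis by (simp add: matrix_mul_assoc)
qed

lemma matrix_inv_eq: "(A::cmat) ** B = mat 1 \<Longrightarrow> B ** A = mat 1 \<Longrightarrow> matrix_inv A = B"
proof -
  assume ab: "A ** B = mat 1" and ba: "B ** A = mat 1"
  have "A ** matrix_inv A = mat 1 \<and> matrix_inv A ** A = mat 1"
    unfolding matrix_inv_def by (rule someI[of _ B]) (use ab ba in simp)
  then have "matrix_inv A = matrix_inv A ** (A ** B)" using ab by simp
  also have "\<dots> = B" using \<open>_ \<and> _\<close> by (simp add: matrix_mul_assoc)
  finally show ?thesis .
qed

lemma sigma_inv: "matrix_inv sigma3 = sigma3 ** sigma3"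
  by (rule matrix_inv_eq) (simp_all add: S3[unfolded mpow3] matrix_mul_assoc)

definition pinv :: complex where "pinv = (1 + \<i>) / 2"

lemma pinv_pi: "(1 - \<i>) * pinv = 1"
  by (simp add: complex_eq_iff pinv_def)

lemma tau_inv: "matrix_inv tau3 = mat pinv ** (Tm ** Tm)"
proof (rule matrix_inv_eq)
  have T3': "Tm ** Tm ** Tm = mat 1" using T3 by (simp add: mpow3)
  show "tau3 ** (mat pinv ** (Tm ** Tm)) = mat 1"
    by (simp add: mat_simps pinv_def field_simps complex_eq_iff)
  show "mat pinv ** (Tm ** Tm) ** tau3 = mat 1"
    by (simp add: mat_simps pinv_def field_simps complex_eq_iff)
qed

lemma Lam2_form: "g \<in> Lam2 \<Longrightarrow> \<exists>\<xi> w. unitDg \<xi> \<and> g = mat \<xi> ** Nalt w"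
proof -
  assume "g \<in> Lam2"
  then obtain u ws where g: "g = mat u ** foldr (**) ws (mat 1)" and u: "unitDg u"
    and ws: "set ws \<subseteq> {sigma3, tau3, matrix_inv sigma3, matrix_inv tau3}"
    by (auto simp: Lam2_def)
  have "\<exists>\<xi> w. unitDg \<xi> \<and> foldr (**) ws (mat 1) = mat \<xi> ** Nalt w" using ws
  proof (induct ws)
    case Nil
    then show ?case by (intro exI[of _ 1] exI[of _ "[]"]) (simp add: unitDg_1)
  next
    case (Cons x ws)
    then obtain \<xi> w where xi: "unitDg \<xi>" and f: "foldr (**) ws (mat 1) = mat \<xi> ** Nalt w" by auto
    have e: "foldr (**) (x # ws) (mat 1) = mat \<xi> ** (x ** Nalt w)"
      using f by (simp add: comm_assoc)
    have "x = sigma3 \<or> x = tau3 \<or> x = matrix_inv sigma3 \<or> x = matrix_inv tau3" using Cons by auto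
    then show ?case
    proof (elim disjE)
      assume "x = sigma3"
      then have "foldr (**) (x # ws) (mat 1) = mat \<xi> ** Nalt ((True, 1) # w)"
        using e by (simp add: Xm_def)
      then show ?thesis using xi by blast
    next
      assume "x = tau3"
      then have "foldr (**) (x # ws) (mat 1) = mat (\<xi> * (1 - \<i>)) ** Nalt ((False, 1) # w)"
        using e by (simp add: Xm_def tau3_eq comm_assoc mat_mult_mat[symmetric] matrix_mul_assoc)
      then show ?thesis using xi unitDg_mult[OF xi unitDg_pi(1)] by blast
    next
      assume "x = matrix_inv sigma3"
      then have "foldr (**) (x # ws) (mat 1) = mat \<xi> ** Nalt ((True, 2) # w)"
        using e by (simp add: Xm_def sigma_inv mpow2)
      then show ?thesis using xi by blast
    next
      assume "x = matrix_inv tau3"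
      then have "foldr (**) (x # ws) (mat 1) = mat (\<xi> * pinv) ** Nalt ((False, 2) # w)"
        using e by (simp add: Xm_def tau_inv mpow2 comm_assoc mat_mult_mat[symmetric] matrix_mul_assoc)
      then show ?thesis using xi unitDg_mult[OF xi unitDg_pi(2)[folded pinv_def]] by blast
    qed
  qed
  then obtain \<xi> w where "unitDg \<xi>" "foldr (**) ws (mat 1) = mat \<xi> ** Nalt w" by blast
  then show ?thesis using g u
    by (intro exI[of _ "u * \<xi>"] exI[of _ w]) (simp add: unitDg_mult mat_mult_mat[symmetric] matrix_mul_assoc)
qed

lemma alt_word_Nil: "alt_word []" by (simp add: alt_word_def)

lemma alt_word_Cons: "alt_word (l # w) \<longleftrightarrow> snd l \<in> {1, 2} \<and> alt_word w \<and> (w \<noteq> [] \<longrightarrow> fst l \<noteq> fst (hd w))"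
proof
  assume a: "alt_word (l # w)"
  have 1: "snd l \<in> {1, 2}" using a by (simp add: alt_word_def)
  have 2: "alt_word w" unfolding alt_word_def
  proof (intro conjI allI impI ballI)
    fix x assume "x \<in> set w" then show "snd x \<in> {1, 2}" using a by (simp add: alt_word_def)
  next
    fix i assume "Suc i < length w"
    then show "fst (w ! i) \<noteq> fst (w ! Suc i)" using a unfolding alt_word_def
      by (metis Suc_less_eq length_Cons nth_Cons_Suc)
  qed
  have 3: "w \<noteq> [] \<longrightarrow> fst l \<noteq> fst (hd w)" using a unfolding alt_word_def
    by (metis hd_conv_nth length_Cons length_greater_0_conv not_less_eq nth_Cons_0 nth_Cons_Suc)
  show "snd l \<in> {1, 2} \<and> alt_word w \<and> (w \<noteq> [] \<longrightarrow> fst l \<noteq> fst (hd w))" using 1 2 3 by blast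
next
  assume a: "snd l \<in> {1, 2} \<and> alt_word w \<and> (w \<noteq> [] \<longrightarrow> fst l \<noteq> fst (hd w))"
  show "alt_word (l # w)" unfolding alt_word_def
  proof (intro conjI allI impI ballI)
    fix x assume "x \<in> set (l # w)" then show "snd x \<in> {1, 2}" using a by (auto simp: alt_word_def)
  next
    fix i assume i: "Suc i < length (l # w)"
    show "fst ((l # w) ! i) \<noteq> fst ((l # w) ! Suc i)"
    proof (cases i)
      case 0
      then show ?thesis using a i by (simp add: hd_conv_nth)
    next
      case (Suc j)
      then show ?thesis using a i by (simp add: alt_word_def)
    qed
  qed
qed

fun push :: "bool \<times> nat \<Rightarrow> (bool \<times> nat) list \<Rightarrow> (bool \<times> nat) list" where
  "push (b, k) [] = (if k mod 3 = 0 then [] else [(b, k mod 3)])"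
| "push (b, k) ((b', k') # w) = (if k mod 3 = 0 then (b', k') # w
     else if b = b' then (if (k + k') mod 3 = 0 then w else (b, (k + k') mod 3) # w)
     else (b, k mod 3) # (b', k') # w)"

lemma mod3_12: "(k::nat) mod 3 \<noteq> 0 \<Longrightarrow> k mod 3 \<in> {1, 2}"
  by auto

lemma Nalt_push: "Nalt (push (b, k) w) = mpow (Xm b) k ** Nalt w"
proof (cases w)
  case Nil
  then show ?thesis using mpow_mod3[OF X3, of b k] by auto
next
  case (Cons l w')
  obtain b' k' where l: "l = (b', k')" by (cases l)
  show ?thesis
  proof (cases "k mod 3 = 0")
    case True
    then show ?thesis using mpow_mod3[OF X3, of b k] Cons l by simp
  next
    case False
    show ?thesis
    proof (cases "b = b'")
      case True
      have "mpow (Xm b) k ** Nalt w = mpow (Xm b) (k + k') ** Nalt w'"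
        using Cons l True by (simp add: mpow_add matrix_mul_assoc)
      also have "\<dots> = mpow (Xm b) ((k + k') mod 3) ** Nalt w'"
        using mpow_mod3[OF X3, of b "k + k'"] by simp
      finally show ?thesis using Cons l True False by auto
    next
      case F: False
      then show ?thesis using Cons l False mpow_mod3[OF X3, of b k] by simp
    qed
  qed
qed

lemma alt_push: "alt_word w \<Longrightarrow> alt_word (push (b, k) w)"
proof (cases w)
  case Nil
  then show ?thesis using mod3_12[of k] by (auto simp: alt_word_Cons alt_word_Nil)
next
  case (Cons l w')
  assume a: "alt_word w"
  obtain b' k' where l: "l = (b', k')" by (cases l)
  have a': "alt_word w'" "w' \<noteq> [] \<longrightarrow> b' \<noteq> fst (hd w')" "k' \<in> {1,2}"
    using a Cons l by (simp_all add: alt_word_Cons)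
  show ?thesis using a a' Cons l by (auto simp: alt_word_Cons)
qed

lemma alt_push': "alt_word w \<Longrightarrow> alt_word (push l w)"
  by (cases l) (simp add: alt_push)

fun nrm :: "(bool \<times> nat) list \<Rightarrow> (bool \<times> nat) list" where
  "nrm [] = []"
| "nrm (l # w) = push l (nrm w)"

lemma nrm_alt: "alt_word (nrm w)"
  by (induct w) (simp_all add: alt_word_Nil alt_push')

lemma Nalt_nrm: "Nalt (nrm w) = Nalt w"
  by (induct w) (auto simp: Nalt_push)




definition pat :: "cvec \<Rightarrow> bool \<times> bool \<times> bool" where
  "pat x = (pb (x$1), pb (x$2), pb (x$3))"

lemma Ovec_iff: "x \<in> Ovec \<longleftrightarrow> x$1 \<in> Gint \<and> x$2 \<in> Gint \<and> x$3 \<in> Gint"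
  by (auto simp: Ovec_def forall_3)

lemma vector_Ovec: "vector [a, b, c] \<in> Ovec \<longleftrightarrow> a \<in> Gint \<and> b \<in> Gint \<and> c \<in> Gint"
  by (simp add: Ovec_iff)

lemma pat_vector: "pat (vector [a, b, c]) = (pb a, pb b, pb c)"
  by (simp add: pat_def)

definition inA :: "nat \<Rightarrow> cvec \<Rightarrow> bool" where
  "inA k x \<longleftrightarrow> (\<exists>y\<in>Ovec. x = pinv ^ k *s y \<and> (pat y = (True, False, True) \<or> pat y = (False, True, True)))"

definition inB :: "nat \<Rightarrow> cvec \<Rightarrow> bool" where
  "inB k x \<longleftrightarrow> (\<exists>y\<in>Ovec. x = pinv ^ k *s y \<and> pat y = (True, True, False))"

lemma SA: "inB k x \<Longrightarrow> inA k (sigma3 *v x) \<and> inA k ((sigma3 ** sigma3) *v x)"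
proof -
  assume "inB k x"
  then obtain y where y: "y \<in> Ovec" "x = pinv ^ k *s y" "pat y = (True, True, False)"
    by (auto simp: inB_def)
  have "sigma3 *v x = pinv ^ k *s vector [y$2, y$3, y$1]"
    using y by (simp add: mv_smult S_mv)
  moreover have "(sigma3 ** sigma3) *v x = pinv ^ k *s vector [y$3, y$1, y$2]"
    using y by (simp add: mv_smult SS_mv)
  ultimately show ?thesis using y unfolding inA_def
    by (auto simp: vector_Ovec Ovec_iff pat_vector pat_def)
qed

lemma pb_Gint_simps:
  assumes "a \<in> Gint" "b \<in> Gint"
  shows "pb (a - b) \<longleftrightarrow> pb a \<noteq> pb b" "pb (a + b) \<longleftrightarrow> pb a \<noteq> pb b"
    "pb (\<i> * a) \<longleftrightarrow> pb a" "pb ((1 - \<i>) * a) \<longleftrightarrow> False" "pb (- a) \<longleftrightarrow> pb a"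
  using assms by (simp_all add: pb_diff pb_add pb_mult pb_consts pb_uminus)

lemma TB: "inA k x \<Longrightarrow> inB (Suc k) (Tm *v x) \<and> inB (Suc k) ((Tm ** Tm) *v x)"
proof -
  assume "inA k x"
  then obtain y where y: "y \<in> Ovec" "x = pinv ^ k *s y" and p: "pat y = (True, False, True) \<or> pat y = (False, True, True)"
    by (auto simp: inA_def)
  have g: "y$1 \<in> Gint" "y$2 \<in> Gint" "y$3 \<in> Gint" using y by (auto simp: Ovec_iff)
  have "Tm *v y = pinv *s vector [y$2 - y$1, \<i> * (y$1 + y$2), (1 - \<i>) * y$3]"
    by (simp add: T_mv vec_eq3 pinv_def field_simps complex_eq_iff)
  then have 1: "Tm *v x = pinv ^ Suc k *s vector [y$2 - y$1, \<i> * (y$1 + y$2), (1 - \<i>) * y$3]"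
    using y by (simp add: mv_smult mult.commute)
  have "(Tm ** Tm) *v y = pinv *s vector [\<i> * y$1 - y$2, - \<i> * y$1 - y$2, (1 - \<i>) * y$3]"
    by (simp add: TT_mv vec_eq3 pinv_def field_simps complex_eq_iff)
  then have 2: "(Tm ** Tm) *v x = pinv ^ Suc k *s vector [\<i> * y$1 - y$2, - \<i> * y$1 - y$2, (1 - \<i>) * y$3]"
    using y by (simp add: mv_smult mult.commute)
  have pp: "pb (y$1) \<noteq> pb (y$2)" using p by (auto simp: pat_def)
  have q1: "pat (vector [y$2 - y$1, \<i> * (y$1 + y$2), (1 - \<i>) * y$3]) = (True, True, False)"
    using pp g by (simp add: pat_vector pb_diff pb_mult pb_add pb_consts)
  have q2: "pat (vector [\<i> * y$1 - y$2, - (\<i> * y$1) - y$2, (1 - \<i>) * y$3]) = (True, True, False)"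
    using pp g by (simp add: pat_vector pb_diff pb_mult pb_add pb_consts pb_uminus)
  have m: "- \<i> * y$1 - y$2 = - (\<i> * y$1) - y$2" by simp
  have o1: "vector [y$2 - y$1, \<i> * (y$1 + y$2), (1 - \<i>) * y$3] \<in> Ovec"
    using g by (simp add: vector_Ovec)
  have o2: "vector [\<i> * y$1 - y$2, - (\<i> * y$1) - y$2, (1 - \<i>) * y$3] \<in> Ovec"
    using g by (simp add: vector_Ovec)
  show ?thesis unfolding inB_def using 1 2 q1 q2 o1 o2 m by metis
qed

definition nT :: "(bool \<times> nat) list \<Rightarrow> nat" where
  "nT w = length (filter (\<lambda>l. \<not> fst l) w)"

lemma mpow_12: "k \<in> {1, 2} \<Longrightarrow> mpow g k = g \<or> mpow g k = g ** g"
  by (auto simp: mpow2)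

lemma pp_step:
  assumes "k \<in> {1, 2}"
  shows "inB j x \<Longrightarrow> inA j (mpow sigma3 k *v x)" "inA j x \<Longrightarrow> inB (Suc j) (mpow Tm k *v x)"
  using mpow_12[OF assms, of sigma3] mpow_12[OF assms, of Tm] SA TB by auto

lemma pingpong:
  "alt_word w \<Longrightarrow> w \<noteq> [] \<Longrightarrow> (if fst (last w) then inB j x else inA j x) \<Longrightarrow>
    (if fst (hd w) then inA (j + nT w) (Nalt w *v x) else inB (j + nT w) (Nalt w *v x))"
proof (induct w)
  case Nil
  then show ?case by simp
next
  case (Cons l w)
  obtain b k where l: "l = (b, k)" by (cases l)
  have k: "k \<in> {1, 2}" and aw: "alt_word w" and hd: "w \<noteq> [] \<longrightarrow> b \<noteq> fst (hd w)"
    using Cons.prems(1) l by (auto simp: alt_word_Cons)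
  show ?case
  proof (cases "w = []")
    case True
    then show ?thesis using Cons.prems(3) l pp_step[OF k] by (auto simp: nT_def Xm_def)
  next
    case False
    have ih: "if fst (hd w) then inA (j + nT w) (Nalt w *v x) else inB (j + nT w) (Nalt w *v x)"
      using Cons.hyps[OF aw False] Cons.prems(3) False by simp
    have e: "Nalt (l # w) *v x = mpow (Xm b) k *v (Nalt w *v x)"
      by (simp add: l matrix_vector_mul_assoc)
    show ?thesis
    proof (cases b)
      case True
      then have "inB (j + nT w) (Nalt w *v x)" using ih hd False by simp
      then show ?thesis using pp_step(1)[OF k] e True l by (simp add: Xm_def nT_def)
    next
      case F: False
      then have "inA (j + nT w) (Nalt w *v x)" using ih hd False by auto
      then show ?thesis using pp_step(2)[OF k] e F l by (simp add: Xm_def nT_def)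
    qed
  qed
qed

lemma pi_pow_pinv: "(1 - \<i>) ^ k * pinv ^ k = 1"
  by (metis pinv_pi power_mult_distrib power_one)

lemma notOvec:
  assumes "k \<ge> 1" "inA k x \<or> inB k x"
  shows "x \<notin> Ovec"
proof
  assume x: "x \<in> Ovec"
  obtain y where y: "y \<in> Ovec" "x = pinv ^ k *s y" and p: "pb (y$1) \<or> pb (y$2) \<or> pb (y$3)"
    using assms(2) by (auto simp: inA_def inB_def pat_def)
  have yx: "y = (1 - \<i>) ^ k *s x"
    using y(2) by (simp add: vec_eq_iff mult.assoc[symmetric] pi_pow_pinv)
  obtain k' where k': "k = Suc k'" using assms(1) by (cases k) auto
  have "\<not> pb (y$i)" for i
  proof -
    have "y$i = (1 - \<i>) * ((1 - \<i>) ^ k' * x$i)" using yx k' by simp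
    moreover have "(1 - \<i>) ^ k' * x$i \<in> Gint" using x by (simp add: Ovec_def)
    ultimately show ?thesis by (simp add: pb_mult pb_consts)
  qed
  then show False using p by blast
qed

definition M0 :: "cvec set" where
  "M0 = {x\<in>Ovec. pb (x$1) = pb (x$2) \<and> \<not> pb (x$3)}"

lemma nT_zero_single:
  assumes "alt_word w" "w \<noteq> []" "nT w = 0"
  shows "\<exists>k\<in>{1,2}. w = [(True, k)]"
proof -
  obtain l w' where w: "w = l # w'" using assms(2) by (cases w) auto
  have all: "\<forall>x\<in>set w. fst x" using assms(3) by (auto simp: nT_def filter_empty_conv)
  have "w' = []"
  proof (rule ccontr)
    assume "w' \<noteq> []"
    then have "fst l \<noteq> fst (hd w')" using assms(1) w by (simp add: alt_word_Cons)
    moreover have "fst l" "fst (hd w')" using all w \<open>w' \<noteq> []\<close> by auto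
    ultimately show False by simp
  qed
  moreover have "snd l \<in> {1, 2}" "fst l" using assms(1) w all by (auto simp: alt_word_Cons)
  ultimately show ?thesis using w by (cases l) auto
qed

lemma stab:
  assumes "alt_word w" "w \<noteq> []"
  shows "(\<exists>x\<in>Ovec. Nalt w *v x \<notin> Ovec) \<or> (\<exists>k\<in>{1,2}. w = [(True, k)])"
proof (cases "nT w = 0")
  case True
  then show ?thesis using nT_zero_single assms by blast
next
  case False
  define x :: cvec where "x = (if fst (last w) then vector [1, 1, 0] else vector [1, 0, 1])"
  have xO: "x \<in> Ovec" by (simp add: x_def vector_Ovec)
  have "if fst (last w) then inB 0 x else inA 0 x"
    by (auto simp: x_def inA_def inB_def vector_Ovec pat_vector pb_consts intro!: bexI[of _ x])
  then have "if fst (hd w) then inA (0 + nT w) (Nalt w *v x) else inB (0 + nT w) (Nalt w *v x)"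
    by (rule pingpong[OF assms])
  then have "inA (0 + nT w) (Nalt w *v x) \<or> inB (0 + nT w) (Nalt w *v x)"
    by (simp split: if_splits)
  then have "Nalt w *v x \<notin> Ovec" using notOvec[of "nT w"] False by simp
  then show ?thesis using xO by blast
qed

lemma e110_M0: "vector [1, 1, 0] \<in> M0"
  by (simp add: M0_def vector_Ovec pb_consts)

lemma S_e110: "mpow sigma3 k *v vector [1, 1, 0] \<notin> M0" if "k \<in> {1, 2}"
  using that by (auto simp: M0_def mpow2 S_mv SS_mv pb_consts)

lemma fix_trivial:
  assumes "(*v) (Nalt w) ` Ovec \<subseteq> Ovec" "(*v) (Nalt w) ` M0 \<subseteq> M0"
  shows "Nalt w = mat 1"
proof -
  have a: "alt_word (nrm w)" by (rule nrm_alt)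
  show ?thesis
  proof (cases "nrm w = []")
    case True
    then show ?thesis by (metis Nalt.simps(1) Nalt_nrm)
  next
    case False
    from stab[OF a False] show ?thesis
    proof
      assume "\<exists>x\<in>Ovec. Nalt (nrm w) *v x \<notin> Ovec"
      then show ?thesis using assms(1) by (auto simp: Nalt_nrm)
    next
      assume "\<exists>k\<in>{1,2}. nrm w = [(True, k)]"
      then obtain k where k: "k \<in> {1,2}" "nrm w = [(True, k)]" by blast
      then have "Nalt w = mpow sigma3 k" by (metis Nalt_nrm Nalt.simps Xm_def matrix_mul_rid)
      then show ?thesis using assms(2) e110_M0 S_e110[OF k(1)] by auto
    qed
  qed
qed

lemma no_scalar:
  assumes "alt_word w" "w \<noteq> []" "\<zeta> \<in> Gint"
  shows "Nalt w \<noteq> mat \<zeta>"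
proof
  assume e: "Nalt w = mat \<zeta>"
  from stab[OF assms(1,2)] show False
  proof
    assume "\<exists>x\<in>Ovec. Nalt w *v x \<notin> Ovec"
    then obtain x where "x \<in> Ovec" "Nalt w *v x \<notin> Ovec" by blast
    then show False using e assms(3) by (simp add: mat_mv Ovec_def)
  next
    assume "\<exists>k\<in>{1,2}. w = [(True, k)]"
    then obtain k where k: "k \<in> {1,2}" "w = [(True, k)]" by blast
    then have "mpow sigma3 k = mat \<zeta>" using e by (simp add: Xm_def)
    then have "mpow sigma3 k $ 1 $ 2 = 0 \<and> mpow sigma3 k $ 1 $ 3 = 0" by (simp add: mat_nth)
    then show False using k(1) by (auto simp: mpow2 mul_nth sigma3_def)
  qed
qed




definition gmod :: "cvec set \<Rightarrow> bool" where
  "gmod L \<longleftrightarrow> (\<forall>x\<in>L. \<forall>y\<in>L. x + y \<in> L) \<and> (\<forall>a\<in>Gint. \<forall>x\<in>L. a *s x \<in> L)"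

lemma gmod_diff: "gmod L \<Longrightarrow> x \<in> L \<Longrightarrow> y \<in> L \<Longrightarrow> x - y \<in> L"
proof -
  assume g: "gmod L" "x \<in> L" "y \<in> L"
  have "(-1::complex) \<in> Gint" by simp
  then have "(-1) *s y \<in> L" using g unfolding gmod_def by blast
  then have "x + (-1) *s y \<in> L" using g unfolding gmod_def by blast
  moreover have "x + (-1) *s y = x - y" by (simp add: vec_eq_iff)
  ultimately show ?thesis by simp
qed

lemma img_comp: "(*v) A ` ((*v) B ` L) = (*v) (A ** B) ` (L :: cvec set)"
  by (simp add: image_image matrix_vector_mul_assoc)

lemma img_id: "(*v) (mat 1) ` L = (L :: cvec set)"
  by simp

lemma img_iff: "U \<in> Uset \<Longrightarrow> y \<in> (*v) U ` A \<longleftrightarrow> mstar U *v y \<in> A"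
proof
  assume u: "U \<in> Uset"
  show "y \<in> (*v) U ` A \<Longrightarrow> mstar U *v y \<in> A"
    using u by (auto simp: matrix_vector_mul_assoc Uset_def)
  assume "mstar U *v y \<in> A"
  moreover have "y = U *v (mstar U *v y)" using u by (simp add: matrix_vector_mul_assoc Uset_def)
  ultimately show "y \<in> (*v) U ` A" by blast
qed

lemma img_cancel: "U \<in> Uset \<Longrightarrow> (*v) (mstar U) ` ((*v) U ` L) = L"
  by (simp add: img_comp Uset_def)

lemma img_cancel2: "U \<in> Uset \<Longrightarrow> (*v) U ` ((*v) (mstar U) ` L) = L"
  by (simp add: img_comp Uset_def)

lemma gmod_img: "gmod L \<Longrightarrow> gmod ((*v) (A::cmat) ` L)"
  unfolding gmod_def
  by (auto simp: matrix_vector_right_distrib[symmetric] mv_smult[symmetric])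

lemma dual_img: "U \<in> Uset \<Longrightarrow> dual ((*v) U ` L) = (*v) U ` dual L"
proof -
  assume u: "U \<in> Uset"
  have "y \<in> dual ((*v) U ` L) \<longleftrightarrow> y \<in> (*v) U ` dual L" for y
    unfolding img_iff[OF u] dual_def by (simp add: hform_adj)
  then show ?thesis by blast
qed

lemma scaleset_img: "scaleset c ((*v) (A::cmat) ` L) = (*v) A ` scaleset c L"
  by (auto simp: scaleset_def image_image mv_smult)

lemma dual_antimono: "A \<subseteq> B \<Longrightarrow> dual B \<subseteq> dual A"
  by (auto simp: dual_def)

lemma hform_Gint: "x \<in> Ovec \<Longrightarrow> y \<in> Ovec \<Longrightarrow> hform x y \<in> Gint"
  by (simp add: hform3 Ovec_iff)

lemma dual_Ovec: "dual Ovec = Ovec"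
proof
  show "Ovec \<subseteq> dual Ovec" by (auto simp: dual_def hform_Gint)
  show "dual Ovec \<subseteq> Ovec"
  proof
    fix y assume y: "y \<in> dual Ovec"
    have e: "vector [1, 0, 0] \<in> Ovec" "vector [0, 1, 0] \<in> Ovec" "vector [0, 0, 1] \<in> Ovec"
      by (simp_all add: vector_Ovec)
    have "hform (vector [1, 0, 0]) y \<in> Gint" "hform (vector [0, 1, 0]) y \<in> Gint" "hform (vector [0, 0, 1]) y \<in> Gint"
      using y e unfolding dual_def by blast+
    then have "cnj (y$1) \<in> Gint" "cnj (y$2) \<in> Gint" "cnj (y$3) \<in> Gint" by (simp_all add: hform3)
    then have "cnj (cnj (y$1)) \<in> Gint" "cnj (cnj (y$2)) \<in> Gint" "cnj (cnj (y$3)) \<in> Gint"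
      by (simp_all only: Gint_cnj)
    then show "y \<in> Ovec" by (simp add: Ovec_iff)
  qed
qed

lemma hpb: "x \<in> Ovec \<Longrightarrow> y \<in> Ovec \<Longrightarrow>
   pb (hform x y) \<longleftrightarrow> ((pb (x$1) \<and> pb (y$1)) \<noteq> ((pb (x$2) \<and> pb (y$2)) \<noteq> (pb (x$3) \<and> pb (y$3))))"
  by (simp add: hform3 Ovec_iff pb_add pb_mult pb_cnj) blast

lemma Ovec_diff: "x \<in> Ovec \<Longrightarrow> y \<in> Ovec \<Longrightarrow> x - y \<in> Ovec"
  by (simp add: Ovec_iff)
lemma Ovec_add: "x \<in> Ovec \<Longrightarrow> y \<in> Ovec \<Longrightarrow> x + y \<in> Ovec"
  by (simp add: Ovec_iff)

lemma S_Ovec: "x \<in> Ovec \<Longrightarrow> mpow sigma3 a *v x \<in> Ovec"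
proof (induct a)
  case 0 then show ?case by simp
next
  case (Suc a)
  then have "mpow sigma3 a *v x \<in> Ovec" by simp
  then show ?case by (simp add: matrix_vector_mul_assoc[symmetric] S_mv vector_Ovec Ovec_iff)
qed

lemma perm_choose:
  assumes "x \<in> Ovec" "pat x = (True, True, False) \<or> pat x = (True, False, True) \<or> pat x = (False, True, True)"
  shows "\<exists>a. pat (mpow sigma3 a *v x) = (True, True, False)"
proof -
  have "pat (mpow sigma3 0 *v x) = pat x" by simp
  moreover have "pat (mpow sigma3 1 *v x) = (pb (x$2), pb (x$3), pb (x$1))" by (simp add: S_mv pat_vector)
  moreover have "pat (mpow sigma3 2 *v x) = (pb (x$3), pb (x$1), pb (x$2))" by (simp add: mpow2 SS_mv pat_vector)
  ultimately show ?thesis using assms(2) unfolding pat_def by (metis prod.inject)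
qed

lemma pi_cnj_pow: "(1 - \<i>) ^ m * cnj ((1 - \<i>) ^ m) = 2 ^ m"
proof -
  have "(1 - \<i>) * cnj (1 - \<i>) = 2" by (simp add: complex_eq_iff)
  then show ?thesis by (metis power_mult_distrib complex_cnj_power)
qed

lemma smult_cancel_pi: "(1 - \<i>) *s a = (1 - \<i>) *s (b::cvec) \<Longrightarrow> a = b"
proof -
  assume h: "(1 - \<i>) *s a = (1 - \<i>) *s (b::cvec)"
  have "1 - \<i> \<noteq> 0" by (simp add: complex_eq_iff)
  then show ?thesis using h vector_mul_lcancel by metis
qed

lemma smult_pi_Ovec: "x \<in> Ovec \<Longrightarrow> \<not> pb (x$1) \<Longrightarrow> \<not> pb (x$2) \<Longrightarrow> \<not> pb (x$3) \<Longrightarrow> \<exists>z\<in>Ovec. x = (1 - \<i>) *s z"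
proof -
  assume x: "x \<in> Ovec" "\<not> pb (x$1)" "\<not> pb (x$2)" "\<not> pb (x$3)"
  obtain z1 z2 z3 where "z1 \<in> Gint" "z2 \<in> Gint" "z3 \<in> Gint" "x$1 = (1 - \<i>) * z1" "x$2 = (1 - \<i>) * z2" "x$3 = (1 - \<i>) * z3"
    using x nopb_iff by (metis Ovec_iff)
  then show ?thesis by (intro bexI[of _ "vector [z1, z2, z3]"]) (simp_all add: vec_eq3 vector_Ovec algebra_simps)
qed

lemma pat_FFF_iff: "x \<in> Ovec \<Longrightarrow> (\<exists>z\<in>Ovec. x = (1 - \<i>) *s z) \<longleftrightarrow> pat x = (False, False, False)"
proof
  assume x: "x \<in> Ovec"
  show "\<exists>z\<in>Ovec. x = (1 - \<i>) *s z \<Longrightarrow> pat x = (False, False, False)"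
  proof -
    assume "\<exists>z\<in>Ovec. x = (1 - \<i>) *s z"
    then obtain z where z: "z \<in> Ovec" "x = (1 - \<i>) *s z" by blast
    have "x$1 = (1 - \<i>) * z$1" "x$2 = (1 - \<i>) * z$2" "x$3 = (1 - \<i>) * z$3"
      by (simp_all only: z(2) vector_smult_component)
    then show ?thesis using z(1) by (simp add: pat_def pb_mult pb_consts Ovec_iff)
  qed
  show "pat x = (False, False, False) \<Longrightarrow> \<exists>z\<in>Ovec. x = (1 - \<i>) *s z"
    using smult_pi_Ovec[OF x] by (simp add: pat_def)
qed

lemma F1:
  assumes "y \<in> Ovec" "pat y = (False, False, False)" "y0 \<in> Ovec" "pat y0 = (True, True, False)"
    "d2 (hform y y0)"
  shows "d2 (y$2 - y$1) \<and> d2 (\<i> * y$1 - y$2)"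
proof -
  obtain a1 b1 a2 b2 a3 b3 where y: "y$1 = gi a1 b1" "y$2 = gi a2 b2" "y$3 = gi a3 b3"
    using assms(1) by (metis GintE Ovec_iff)
  obtain c1 d1 c2 d2 c3 d3 where y0: "y0$1 = gi c1 d1" "y0$2 = gi c2 d2" "y0$3 = gi c3 d3"
    using assms(3) by (metis GintE Ovec_iff)
  have p: "even (a1 + b1)" "even (a2 + b2)" "even (a3 + b3)" "odd (c1 + d1)" "odd (c2 + d2)" "even (c3 + d3)"
    using assms(2,4) by (simp_all add: pat_def y y0)
  have h: "hform y y0 = gi (a1*c1 + b1*d1 + (a2*c2 + b2*d2) + (a3*c3 + b3*d3)) (b1*c1 - a1*d1 + (b2*c2 - a2*d2) + (b3*c3 - a3*d3))"
    by (simp add: hform3 y y0 gi_cnj gi_mult gi_add)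
  have e: "even (a1*c1 + b1*d1 + (a2*c2 + b2*d2) + (a3*c3 + b3*d3))" "even (b1*c1 - a1*d1 + (b2*c2 - a2*d2) + (b3*c3 - a3*d3))"
    using assms(5) by (simp_all add: h d2_gi)
  have "y$2 - y$1 = gi (a2 - a1) (b2 - b1)" "\<i> * y$1 - y$2 = gi (- b1 - a2) (a1 - b2)"
    by (simp_all add: y gi_diff gi_consts(3) gi_mult)
  moreover have "even (a2 - a1) \<and> even (b2 - b1) \<and> even (- b1 - a2) \<and> even (a1 - b2)"
    using p e by simp presburger
  ultimately show ?thesis by (simp add: d2_gi)
qed




lemma F2:
  assumes "y \<in> Ovec" "pat y = (True, True, False)"
  shows "d2 (y$2 - y$1) \<or> d2 (\<i> * y$1 - y$2)"
proof -
  obtain a1 b1 a2 b2 where y: "y$1 = gi a1 b1" "y$2 = gi a2 b2"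
    using assms(1) by (metis GintE Ovec_iff)
  have p: "odd (a1 + b1)" "odd (a2 + b2)"
    using assms(2) by (simp_all add: pat_def y)
  have "y$2 - y$1 = gi (a2 - a1) (b2 - b1)" "\<i> * y$1 - y$2 = gi (- b1 - a2) (a1 - b2)"
    by (simp_all add: y gi_diff gi_consts(3) gi_mult)
  moreover have "(even (a2 - a1) \<and> even (b2 - b1)) \<or> (even (- b1 - a2) \<and> even (a1 - b2))"
    using p by presburger
  ultimately show ?thesis by (auto simp: d2_gi)
qed

lemma G1:
  assumes "y \<in> Ovec" "\<not> pb (y$3)" "d2 (y$2 - y$1)"
  shows "\<exists>z\<in>Ovec. Tm *v y = (1 - \<i>) *s z"
proof -
  obtain w where w: "w \<in> Gint" "y$2 - y$1 = 2 * w" using assms(3) by (auto simp: d2_def)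
  obtain w3 where w3: "w3 \<in> Gint" "y$3 = (1 - \<i>) * w3" using assms(1,2) nopb_iff Ovec_iff by blast
  have y2: "y$2 = y$1 + 2 * w" using w(2) by (simp add: algebra_simps)
  have g1: "y$1 \<in> Gint" using assms(1) by (simp add: Ovec_iff)
  have "Tm *v y = (1 - \<i>) *s vector [\<i> * w, - (w + y$1), w3]"
    by (simp add: T_mv vec_eq3 y2 w3(2) field_simps complex_eq_iff)
  moreover have "vector [\<i> * w, - (w + y$1), w3] \<in> Ovec" using w w3 g1 by (simp add: vector_Ovec)
  ultimately show ?thesis by blast
qed

lemma G2:
  assumes "y \<in> Ovec" "\<not> pb (y$3)" "d2 (\<i> * y$1 - y$2)"
  shows "\<exists>z\<in>Ovec. (Tm ** Tm) *v y = (1 - \<i>) *s z"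
proof -
  obtain w where w: "w \<in> Gint" "\<i> * y$1 - y$2 = 2 * w" using assms(3) by (auto simp: d2_def)
  obtain w3 where w3: "w3 \<in> Gint" "y$3 = (1 - \<i>) * w3" using assms(1,2) nopb_iff Ovec_iff by blast
  have y2: "y$2 = \<i> * y$1 - 2 * w" using w(2) by (simp add: algebra_simps)
  have g1: "y$1 \<in> Gint" using assms(1) by (simp add: Ovec_iff)
  have "(Tm ** Tm) *v y = (1 - \<i>) *s vector [\<i> * w, y$1 + \<i> * w, w3]"
    by (simp add: TT_mv vec_eq3 y2 w3(2) field_simps complex_eq_iff)
  moreover have "vector [\<i> * w, y$1 + \<i> * w, w3] \<in> Ovec" using w w3 g1 by (simp add: vector_Ovec)
  ultimately show ?thesis by blast
qed

lemma C1_trans: "d2 ((a - b)$2 - (a - b)$1) \<Longrightarrow> d2 (b$2 - b$1) \<Longrightarrow> d2 (a$2 - (a::cvec)$1)"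
proof -
  assume "d2 ((a - b)$2 - (a - b)$1)" "d2 (b$2 - b$1)"
  then have "d2 (((a - b)$2 - (a - b)$1) + (b$2 - b$1))" by (rule d2_add)
  moreover have "((a - b)$2 - (a - b)$1) + (b$2 - b$1) = a$2 - a$1" by simp
  ultimately show ?thesis by simp
qed

lemma C2_trans: "d2 (\<i> * (a - b)$1 - (a - b)$2) \<Longrightarrow> d2 (\<i> * b$1 - b$2) \<Longrightarrow> d2 (\<i> * a$1 - (a::cvec)$2)"
proof -
  assume "d2 (\<i> * (a - b)$1 - (a - b)$2)" "d2 (\<i> * b$1 - b$2)"
  then have "d2 ((\<i> * (a - b)$1 - (a - b)$2) + (\<i> * b$1 - b$2))" by (rule d2_add)
  moreover have "(\<i> * (a - b)$1 - (a - b)$2) + (\<i> * b$1 - b$2) = \<i> * a$1 - a$2" by (simp add: algebra_simps)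
  ultimately show ?thesis by metis
qed

lemma vertex_finish:
  assumes IH: "\<And>L'. gmod L' \<Longrightarrow> dual L' = L' \<Longrightarrow> scaleset ((1 - \<i>) ^ n) L' \<subseteq> Ovec \<Longrightarrow> \<exists>w. L' = (*v) (Nalt w) ` Ovec"
    and g: "gmod L" "dual L = L" "scaleset ((1 - \<i>) ^ n) ((*v) (Nalt ws) ` L) \<subseteq> Ovec"
  shows "\<exists>w. L = (*v) (Nalt w) ` Ovec"
proof -
  let ?W = "Nalt ws"
  have u: "?W \<in> Uset" by (rule Nalt_Uset)
  have "gmod ((*v) ?W ` L)" using g(1) by (rule gmod_img)
  moreover have "dual ((*v) ?W ` L) = (*v) ?W ` L" using g(2) by (simp add: dual_img[OF u])
  ultimately obtain w where w: "(*v) ?W ` L = (*v) (Nalt w) ` Ovec" using IH g(3) by blast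
  have "L = (*v) (mstar ?W) ` ((*v) ?W ` L)" by (simp add: img_cancel[OF u])
  also have "\<dots> = (*v) (Nalt (winv ws @ w)) ` Ovec"
    by (simp add: w img_comp Nalt_append Nalt_inv_mstar)
  finally show ?thesis by blast
qed

lemma scaleset_mem: "scaleset c L \<subseteq> A \<longleftrightarrow> (\<forall>x\<in>L. c *s x \<in> A)"
  by (auto simp: scaleset_def)

lemma vertex_step:
  assumes IH: "\<And>L'. gmod L' \<Longrightarrow> dual L' = L' \<Longrightarrow> scaleset ((1 - \<i>) ^ n) L' \<subseteq> Ovec \<Longrightarrow> \<exists>w. L' = (*v) (Nalt w) ` Ovec"
    and g: "gmod L" "dual L = L" "scaleset ((1 - \<i>) ^ Suc n) L \<subseteq> Ovec"
  shows "\<exists>w. L = (*v) (Nalt w) ` Ovec"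
proof (cases "scaleset ((1 - \<i>) ^ n) L \<subseteq> Ovec")
  case True
  then show ?thesis using IH g by blast
next
  case False
  then obtain x1 where x1: "x1 \<in> L" "(1 - \<i>) ^ n *s x1 \<notin> Ovec" by (auto simp: scaleset_mem)
  define P where "P = (1 - \<i>) ^ Suc n"
  have Psplit: "P *s x = (1 - \<i>) *s ((1 - \<i>) ^ n *s x)" for x :: cvec
    by (simp add: P_def vector_smult_assoc)
  have fO: "\<forall>x\<in>L. P *s x \<in> Ovec" using g(3) by (simp add: scaleset_mem P_def)
  have hG: "\<forall>x\<in>L. \<forall>y\<in>L. hform x y \<in> Gint" using g(2) unfolding dual_def by blast
  have d2f: "d2 (hform (P *s x) (P *s y))" if "x \<in> L" "y \<in> L" for x y
  proof -
    have "hform (P *s x) (P *s y) = 2 * (2 ^ n * hform x y)"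
      unfolding hform_smult P_def pi_cnj_pow by simp
    moreover have "2 ^ n * hform x y \<in> Gint" using hG that by simp
    ultimately show ?thesis by (auto simp: d2_def)
  qed
  define x0 where "x0 = P *s x1"
  have x0O: "x0 \<in> Ovec" using fO x1 by (simp add: x0_def)
  have x0nz: "pat x0 \<noteq> (False, False, False)"
  proof
    assume "pat x0 = (False, False, False)"
    then obtain z where z: "z \<in> Ovec" "x0 = (1 - \<i>) *s z" using pat_FFF_iff[OF x0O] by blast
    then have "(1 - \<i>) ^ n *s x1 = z" using Psplit[of x1] by (metis smult_cancel_pi x0_def)
    then show False using x1 z by simp
  qed
  have "\<not> pb (hform x0 x0)" using d2f[OF x1(1) x1(1)] d2_nopb by (simp add: x0_def)
  then have "pat x0 = (True, True, False) \<or> pat x0 = (True, False, True) \<or> pat x0 = (False, True, True)"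
    using x0nz hpb[OF x0O x0O] by (auto simp: pat_def)
  then obtain a where pa: "pat (mpow sigma3 a *v x0) = (True, True, False)"
    using perm_choose[OF x0O] by blast
  define V where "V = mpow sigma3 a"
  have VU: "V \<in> Uset" by (simp add: V_def Uset_mpow Uset_S)
  then have VV: "mstar V ** V = mat 1" by (simp add: Uset_def)
  define gg where "gg x = V *v (P *s x)" for x
  have gO: "gg x \<in> Ovec" if "x \<in> L" for x using fO that S_Ovec by (simp add: gg_def V_def)
  have gd2: "d2 (hform (gg x) (gg y))" if "x \<in> L" "y \<in> L" for x y
    using d2f[OF that] by (simp add: gg_def hform_unitary[OF VV])
  define y0 where "y0 = gg x1"
  have y0O: "y0 \<in> Ovec" using gO x1 by (simp add: y0_def)
  have py0: "pat y0 = (True, True, False)" using pa by (simp add: y0_def gg_def x0_def V_def)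
  have gdiff: "gg (x - x1) = gg x - y0" for x
    by (simp add: gg_def y0_def vec_eq3 mv_nth algebra_simps)
  have patL: "pat (gg x) = (False, False, False) \<or> pat (gg x) = (True, True, False)" if "x \<in> L" for x
  proof -
    have "\<not> pb (hform (gg x) (gg x))" "\<not> pb (hform (gg x) y0)"
      using gd2[OF that that] gd2[OF that x1(1)] d2_nopb by (auto simp: y0_def)
    then show ?thesis using hpb[OF gO[OF that] gO[OF that]] hpb[OF gO[OF that] y0O] py0
      by (auto simp: pat_def)
  qed
  have FFFcase: "d2 ((gg x)$2 - (gg x)$1) \<and> d2 (\<i> * (gg x)$1 - (gg x)$2)"
    if "x \<in> L" "pat (gg x) = (False, False, False)" for x
    using F1[OF gO[OF that(1)] that(2) y0O py0] gd2[OF that(1) x1(1)] by (simp add: y0_def)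
  have diffFFF: "pat (gg (x - x1)) = (False, False, False)" if "x \<in> L" "pat (gg x) = (True, True, False)" for x
    using that py0 gO[OF that(1)] y0O unfolding gdiff by (simp add: pat_def pb_diff Ovec_iff)
  have xdL: "x - x1 \<in> L" if "x \<in> L" for x using gmod_diff[OF g(1) that x1(1)] .
  have allC: "(\<forall>x\<in>L. d2 ((gg x)$2 - (gg x)$1)) \<or> (\<forall>x\<in>L. d2 (\<i> * (gg x)$1 - (gg x)$2))"
  proof (cases "d2 (y0$2 - y0$1)")
    case True
    have "d2 ((gg x)$2 - (gg x)$1)" if "x \<in> L" for x
    proof (cases "pat (gg x) = (False, False, False)")
      case True
      then show ?thesis using FFFcase that by blast
    next
      case False
      then have "pat (gg (x - x1)) = (False, False, False)" using diffFFF patL that by blast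
      then have "d2 ((gg x - y0)$2 - (gg x - y0)$1)" using FFFcase[OF xdL[OF that]] by (simp add: gdiff)
      then show ?thesis using C1_trans \<open>d2 (y0$2 - y0$1)\<close> by blast
    qed
    then show ?thesis by blast
  next
    case False
    then have c2: "d2 (\<i> * y0$1 - y0$2)" using F2[OF y0O py0] by blast
    have "d2 (\<i> * (gg x)$1 - (gg x)$2)" if "x \<in> L" for x
    proof (cases "pat (gg x) = (False, False, False)")
      case True
      then show ?thesis using FFFcase that by blast
    next
      case False
      then have "pat (gg (x - x1)) = (False, False, False)" using diffFFF patL that by blast
      then have "d2 (\<i> * (gg x - y0)$1 - (gg x - y0)$2)" using FFFcase[OF xdL[OF that]] by (simp add: gdiff)
      then show ?thesis using C2_trans c2 by blast
    qed
    then show ?thesis by blast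
  qed
  have p3: "\<not> pb ((gg x)$3)" if "x \<in> L" for x using patL[OF that] by (auto simp: pat_def)
  from allC show ?thesis
  proof
    assume c: "\<forall>x\<in>L. d2 ((gg x)$2 - (gg x)$1)"
    have "(1 - \<i>) ^ n *s (Nalt [(False, 1), (True, a)] *v x) \<in> Ovec" if xL: "x \<in> L" for x
    proof -
      obtain z where z: "z \<in> Ovec" "Tm *v gg x = (1 - \<i>) *s z"
        using G1[OF gO[OF xL] p3[OF xL]] c xL by blast
      have "Tm *v gg x = (1 - \<i>) *s ((1 - \<i>) ^ n *s (Nalt [(False, 1), (True, a)] *v x))"
        by (simp add: gg_def V_def Xm_def mv_smult matrix_vector_mul_assoc[symmetric] Psplit)
      then show ?thesis using z smult_cancel_pi by metis
    qed
    then have "scaleset ((1 - \<i>) ^ n) ((*v) (Nalt [(False, 1), (True, a)]) ` L) \<subseteq> Ovec"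
      by (auto simp: scaleset_def)
    then show ?thesis using vertex_finish[of n L "[(False, 1), (True, a)]"] IH g(1,2) by blast
  next
    assume c: "\<forall>x\<in>L. d2 (\<i> * (gg x)$1 - (gg x)$2)"
    have "(1 - \<i>) ^ n *s (Nalt [(False, 2), (True, a)] *v x) \<in> Ovec" if xL: "x \<in> L" for x
    proof -
      obtain z where z: "z \<in> Ovec" "(Tm ** Tm) *v gg x = (1 - \<i>) *s z"
        using G2[OF gO[OF xL] p3[OF xL]] c xL by blast
      have "(Tm ** Tm) *v gg x = (1 - \<i>) *s ((1 - \<i>) ^ n *s (Nalt [(False, 2), (True, a)] *v x))"
        by (simp add: gg_def V_def Xm_def mpow2 mv_smult matrix_vector_mul_assoc[symmetric] Psplit)
      then show ?thesis using z smult_cancel_pi by metis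
    qed
    then have "scaleset ((1 - \<i>) ^ n) ((*v) (Nalt [(False, 2), (True, a)]) ` L) \<subseteq> Ovec"
      by (auto simp: scaleset_def)
    then show ?thesis using vertex_finish[of n L "[(False, 2), (True, a)]"] IH g(1,2) by blast
  qed
qed

lemma vertex_n: "gmod L \<Longrightarrow> dual L = L \<Longrightarrow> scaleset ((1 - \<i>) ^ n) L \<subseteq> Ovec \<Longrightarrow> \<exists>w. L = (*v) (Nalt w) ` Ovec"
proof (induct n arbitrary: L)
  case 0
  then have "L \<subseteq> Ovec" by (auto simp: scaleset_def)
  then have "Ovec \<subseteq> L" using dual_antimono[of L Ovec] 0 dual_Ovec by simp
  then have "L = (*v) (Nalt []) ` Ovec" using \<open>L \<subseteq> Ovec\<close> by simp
  then show ?case by blast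
next
  case (Suc n)
  show ?case by (rule vertex_step[OF Suc.hyps Suc.prems])
qed




lemma pi_sq: "(1 - \<i>) ^ 2 = - 2 * \<i>"
  by (simp add: power2_eq_square complex_eq_iff)

lemma pi_pow_half: "(1 - \<i>) ^ (2 * m) * (1 / 2 ^ m) = (- \<i>) ^ m"
proof -
  have "(1 - \<i>) ^ (2 * m) = ((1 - \<i>) ^ 2) ^ m" by (rule power_mult)
  also have "\<dots> = ((- \<i>) * 2) ^ m" by (simp only: pi_sq) (simp add: mult.commute)
  also have "\<dots> = (- \<i>) ^ m * 2 ^ m" by (rule power_mult_distrib)
  finally have "(1 - \<i>) ^ (2 * m) = (- \<i>) ^ m * 2 ^ m" .
  then show ?thesis by simp
qed

lemma is_lattice_gmod: "is_lattice L \<Longrightarrow> gmod L"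
  by (simp add: is_lattice_def gmod_def)

lemma is_lattice_bound: "is_lattice L \<Longrightarrow> \<exists>n. scaleset ((1 - \<i>) ^ n) L \<subseteq> Ovec"
proof -
  assume "is_lattice L"
  then obtain m where m: "L \<subseteq> scaleset (1 / 2 ^ m) Ovec" by (auto simp: is_lattice_def)
  have "(1 - \<i>) ^ (2 * m) *s x \<in> Ovec" if xL: "x \<in> L" for x
  proof -
    obtain z where z: "z \<in> Ovec" "x = (1 / 2 ^ m) *s z" using m xL by (auto simp: scaleset_def)
    have "(1 - \<i>) ^ (2 * m) *s x = (- \<i>) ^ m *s z"
      by (simp only: z(2) vector_smult_assoc pi_pow_half)
    moreover have "(- \<i>) ^ m *s z \<in> Ovec" using z(1) by (simp add: Ovec_def)
    ultimately show ?thesis by simp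
  qed
  then show ?thesis by (auto simp: scaleset_def)
qed

lemma vertex: "is_lattice L \<Longrightarrow> dual L = L \<Longrightarrow> \<exists>w. L = (*v) (Nalt w) ` Ovec"
  using is_lattice_bound vertex_n is_lattice_gmod by blast

lemma piOvec: "x \<in> scaleset (1 - \<i>) Ovec \<longleftrightarrow> x \<in> Ovec \<and> pat x = (False, False, False)"
proof
  assume "x \<in> scaleset (1 - \<i>) Ovec"
  then obtain z where z: "z \<in> Ovec" "x = (1 - \<i>) *s z" by (auto simp: scaleset_def)
  have "x$1 = (1 - \<i>) * z$1" "x$2 = (1 - \<i>) * z$2" "x$3 = (1 - \<i>) * z$3"
    by (simp_all only: z(2) vector_smult_component)
  then have xO: "x \<in> Ovec" using z(1) by (simp add: Ovec_iff)
  then show "x \<in> Ovec \<and> pat x = (False, False, False)" using pat_FFF_iff[OF xO] z by blast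
next
  assume "x \<in> Ovec \<and> pat x = (False, False, False)"
  then show "x \<in> scaleset (1 - \<i>) Ovec" using pat_FFF_iff by (auto simp: scaleset_def)
qed

lemma mstar_S: "mstar sigma3 = sigma3 ** sigma3" by (simp add: mat_simps)
lemma mstar_SS: "mstar (sigma3 ** sigma3) = sigma3" by (simp add: mat_simps)

lemma E0:
  assumes sub: "M \<subseteq> Ovec" and sup: "scaleset (1 - \<i>) Ovec \<subseteq> M" and ne: "M \<noteq> scaleset (1 - \<i>) Ovec"
    and gm: "gmod M" and iso: "\<forall>x\<in>M. \<forall>y\<in>M. \<not> pb (hform x y)"
  shows "\<exists>a. M = (*v) (mpow sigma3 a) ` M0"
proof -
  obtain x0 where x0: "x0 \<in> M" "x0 \<notin> scaleset (1 - \<i>) Ovec" using sup ne by blast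
  have x0O: "x0 \<in> Ovec" using x0 sub by blast
  have nz: "pat x0 \<noteq> (False, False, False)" using x0 x0O piOvec by blast
  have "\<not> pb (hform x0 x0)" using iso x0 by blast
  then have p3: "pat x0 = (True, True, False) \<or> pat x0 = (True, False, True) \<or> pat x0 = (False, True, True)"
    using nz hpb[OF x0O x0O] by (auto simp: pat_def)
  have Meq: "M = {y \<in> Ovec. pat y = (False, False, False) \<or> pat y = pat x0}"
  proof
    show "M \<subseteq> {y \<in> Ovec. pat y = (False, False, False) \<or> pat y = pat x0}"
    proof
      fix y assume y: "y \<in> M"
      have yO: "y \<in> Ovec" using y sub by blast
      have "\<not> pb (hform y y)" "\<not> pb (hform y x0)" using iso y x0 by blast+
      then have "pat y = (False, False, False) \<or> pat y = pat x0"
        using p3 hpb[OF yO yO] hpb[OF yO x0O] by (auto simp: pat_def)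
      then show "y \<in> {y \<in> Ovec. pat y = (False, False, False) \<or> pat y = pat x0}" using yO by blast
    qed
    show "{y \<in> Ovec. pat y = (False, False, False) \<or> pat y = pat x0} \<subseteq> M"
    proof
      fix y assume y: "y \<in> {y \<in> Ovec. pat y = (False, False, False) \<or> pat y = pat x0}"
      then have yO: "y \<in> Ovec" by blast
      show "y \<in> M"
      proof (cases "pat y = (False, False, False)")
        case True
        then show ?thesis using yO piOvec sup by blast
      next
        case False
        then have "pat y = pat x0" using y by blast
        then have "pat (y - x0) = (False, False, False)" using yO x0O
          by (simp add: pat_def pb_diff Ovec_iff)
        then have "y - x0 \<in> M" using Ovec_diff[OF yO x0O] piOvec sup by blast
        then have "(y - x0) + x0 \<in> M" using gm x0(1) unfolding gmod_def by blast
        then show ?thesis by simp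
      qed
    qed
  qed
  have uS: "sigma3 \<in> Uset" "sigma3 ** sigma3 \<in> Uset" by (simp_all add: Uset_S Uset_mult)
  have m0: "(*v) (mpow sigma3 0) ` M0 = {y \<in> Ovec. pat y = (False, False, False) \<or> pat y = (True, True, False)}"
    by (auto simp: M0_def pat_def)
  have m1: "(*v) (mpow sigma3 1) ` M0 = {y \<in> Ovec. pat y = (False, False, False) \<or> pat y = (True, False, True)}"
  proof -
    have "y \<in> (*v) sigma3 ` M0 \<longleftrightarrow> y \<in> Ovec \<and> (pat y = (False, False, False) \<or> pat y = (True, False, True))" for y
      unfolding img_iff[OF uS(1)] mstar_S SS_mv by (auto simp: M0_def pat_def vector_Ovec Ovec_iff)
    then show ?thesis by auto
  qed
  have m2: "(*v) (mpow sigma3 2) ` M0 = {y \<in> Ovec. pat y = (False, False, False) \<or> pat y = (False, True, True)}"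
  proof -
    have "y \<in> (*v) (sigma3 ** sigma3) ` M0 \<longleftrightarrow> y \<in> Ovec \<and> (pat y = (False, False, False) \<or> pat y = (False, True, True))" for y
      unfolding img_iff[OF uS(2)] mstar_SS S_mv by (auto simp: M0_def pat_def vector_Ovec Ovec_iff)
    then show ?thesis by (auto simp: mpow2)
  qed
  from p3 show ?thesis
  proof (elim disjE)
    assume "pat x0 = (True, True, False)" then have "M = (*v) (mpow sigma3 0) ` M0" using Meq m0 by simp
    then show ?thesis by blast
  next
    assume "pat x0 = (True, False, True)" then have "M = (*v) (mpow sigma3 1) ` M0" using Meq m1 by simp
    then show ?thesis by blast
  next
    assume "pat x0 = (False, True, True)" then have "M = (*v) (mpow sigma3 2) ` M0" using Meq m2 by simp
    then show ?thesis by blast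
  qed
qed

lemma hform_smult_right: "hform x (d *s y) = cnj d * hform x y"
  by (simp add: hform3 algebra_simps)

lemma S_Ovec_eq: "(*v) (mpow sigma3 a) ` Ovec = Ovec"
proof
  show "(*v) (mpow sigma3 a) ` Ovec \<subseteq> Ovec" using S_Ovec by blast
  show "Ovec \<subseteq> (*v) (mpow sigma3 a) ` Ovec"
  proof
    fix x assume x: "x \<in> Ovec"
    have "mpow sigma3 a ** mpow sigma3 (2 * a) = mat 1"
      using mpow_add[of sigma3 a "2 * a", symmetric] mpow_mult3[OF S3, of a] by (simp add: mult.commute)
    then have "x = mpow sigma3 a *v (mpow sigma3 (2 * a) *v x)" by (simp add: matrix_vector_mul_assoc)
    then show "x \<in> (*v) (mpow sigma3 a) ` Ovec" using S_Ovec[OF x] by blast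
  qed
qed

lemma edge_form:
  assumes "e \<in> BT_edges"
  shows "\<exists>w. e = ((*v) (Nalt w) ` Ovec, (*v) (Nalt w) ` M0)"
proof -
  obtain L0 M where e: "e = (L0, M)" and lat: "is_lattice L0" "is_lattice M" and sd: "dual L0 = L0"
    and hML: "M \<subseteq> L0" and s1: "scaleset unif L0 \<subset> M" and s2: "M \<subset> scaleset unif (dual M)"
    using assms by (auto simp: BT_edges_def)
  obtain w0 where L0: "L0 = (*v) (Nalt w0) ` Ovec" using vertex[OF lat(1) sd] by blast
  define U where "U = Nalt w0"
  have u: "U \<in> Uset" by (simp add: U_def Nalt_Uset)
  define M' where "M' = (*v) (mstar U) ` M"
  have MM': "M = (*v) U ` M'" by (simp add: M'_def img_cancel2[OF u])
  have a: "M' \<subseteq> Ovec" using hML unfolding M'_def L0 U_def[symmetric] by (metis image_mono img_cancel[OF u])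
  have b: "scaleset (1 - \<i>) Ovec \<subseteq> M'"
  proof -
    have "(*v) U ` scaleset (1 - \<i>) Ovec \<subseteq> M" using s1 by (simp add: L0 U_def[symmetric] scaleset_img unif_def)
    then show ?thesis unfolding M'_def by (metis image_mono img_cancel[OF u])
  qed
  have c: "M' \<noteq> scaleset (1 - \<i>) Ovec"
  proof
    assume "M' = scaleset (1 - \<i>) Ovec"
    then have "M = scaleset unif L0" by (simp add: MM' L0 U_def scaleset_img unif_def)
    then show False using s1 by blast
  qed
  have d: "gmod M'" unfolding M'_def by (rule gmod_img[OF is_lattice_gmod[OF lat(2)]])
  have isoM: "\<not> pb (hform x y)" if xM: "x \<in> M" and yM: "y \<in> M" for x y
  proof -
    obtain z where z: "z \<in> dual M" "y = unif *s z" using s2 yM by (auto simp: scaleset_def)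
    have hz: "hform x z \<in> Gint" using z(1) xM by (auto simp: dual_def)
    have h1: "hform x y = cnj unif * hform x z" by (simp only: z(2) hform_smult_right)
    have h2: "cnj unif = (1 - \<i>) * \<i>" by (simp add: unif_def complex_eq_iff)
    have "hform x y = (1 - \<i>) * (\<i> * hform x z)" by (simp only: h1 h2 mult.assoc)
    then show ?thesis using hz by (simp add: pb_mult pb_consts)
  qed
  have e': "\<forall>x\<in>M'. \<forall>y\<in>M'. \<not> pb (hform x y)"
  proof (intro ballI)
    fix x y assume "x \<in> M'" "y \<in> M'"
    then obtain x' y' where "x' \<in> M" "y' \<in> M" "x = mstar U *v x'" "y = mstar U *v y'" by (auto simp: M'_def)
    moreover have "mstar (mstar U) ** mstar U = mat 1" using u by (simp add: mstar_mstar Uset_def)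
    ultimately show "\<not> pb (hform x y)" using isoM by (simp add: hform_unitary)
  qed
  obtain a where Ma: "M' = (*v) (mpow sigma3 a) ` M0" using E0[OF a b c d e'] by blast
  have "Nalt (w0 @ [(True, a)]) = U ** mpow sigma3 a" by (simp add: Nalt_append U_def Xm_def)
  then have "(*v) (Nalt (w0 @ [(True, a)])) ` Ovec = L0" "(*v) (Nalt (w0 @ [(True, a)])) ` M0 = M"
    by (simp_all add: img_comp[symmetric] S_Ovec_eq L0 U_def MM' Ma)
  then show ?thesis using e by metis
qed




lemma mat_xi_mv: "(mat \<xi> ** U) *v x = \<xi> *s (U *v (x::cvec))"
  by (simp add: matrix_vector_mul_assoc[symmetric] mat_mv)

lemma act_lat_eq:
  assumes xi: "unitDg \<xi>" and u: "U \<in> Uset" and gm: "gmod L"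
  shows "act_lat (mat \<xi> ** U) L = (*v) U ` L"
proof -
  let ?g = "mat \<xi> ** U"
  have gg: "?g ** mstar ?g = mat (complex_of_real ((cmod \<xi>)^2))"
  proof -
    have "?g ** mstar ?g = mat \<xi> ** (U ** mstar U) ** mat (cnj \<xi>)"
      by (simp add: mstar_mult mstar_mat matrix_mul_assoc)
    also have "\<dots> = mat (\<xi> * cnj \<xi>)" using u by (simp add: Uset_def mat_mult_mat)
    finally show ?thesis by (simp only: complex_norm_square)
  qed
  have xi0: "\<xi> \<noteq> 0" "inverse \<xi> \<in> Dg" "\<xi> \<in> Dg" using xi by (auto simp: unitDg_def)
  have ex: "\<exists>c. c \<in> Dg \<and> (\<exists>l. ?g ** mstar ?g = mat (complex_of_real l) \<and> (cmod c)\<^sup>2 * l = 1)"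
  proof -
    have "(cmod (inverse \<xi>))\<^sup>2 * (cmod \<xi>)^2 = 1" using xi0 by (simp add: norm_inverse power_inverse)
    then show ?thesis using gg xi0 by blast
  qed
  define c where "c = gscale ?g"
  have c: "c \<in> Dg \<and> (\<exists>l. ?g ** mstar ?g = mat (complex_of_real l) \<and> (cmod c)\<^sup>2 * l = 1)"
    unfolding c_def gscale_def by (rule someI_ex[OF ex])
  then obtain l where l: "?g ** mstar ?g = mat (complex_of_real l)" "(cmod c)\<^sup>2 * l = 1" by blast
  have "complex_of_real l = complex_of_real ((cmod \<xi>)^2)" using l(1) gg mat_inj by metis
  then have "l = (cmod \<xi>)^2" by (simp only: of_real_eq_iff)
  then have "(cmod (c * \<xi>))^2 = 1" using l(2) by (simp add: norm_mult power_mult_distrib)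
  then have n1: "cmod (c * \<xi>) = 1" using norm_ge_zero[of "c * \<xi>"] by (simp add: power2_eq_1_iff)
  define z where "z = c * \<xi>"
  have zG: "z \<in> Gint" using Dg_norm1_Gint[of z] n1 c xi0 by (simp add: z_def)
  have zz: "cnj z * z = 1"
  proof -
    have "z * cnj z = complex_of_real ((cmod z)^2)" by (simp only: complex_norm_square)
    then show ?thesis using n1 by (simp add: z_def mult.commute)
  qed
  have "act_lat ?g L = (\<lambda>x. U *v (z *s x)) ` L"
    unfolding act_lat_def c_def[symmetric]
    by (rule image_cong) (simp_all add: mat_xi_mv mv_smult vector_smult_assoc z_def)
  also have "\<dots> = (*v) U ` ((\<lambda>x. z *s x) ` L)" by (simp add: image_image)
  also have "(\<lambda>x. z *s x) ` L = L"
  proof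
    show "(\<lambda>x. z *s x) ` L \<subseteq> L" using gm zG by (auto simp: gmod_def)
    show "L \<subseteq> (\<lambda>x. z *s x) ` L"
    proof
      fix x assume x: "x \<in> L"
      have zz': "z * cnj z = 1" using zz by (simp add: mult.commute)
      have "x = z *s (cnj z *s x)" by (simp only: vector_smult_assoc zz' vector_smult_lid)
      moreover have "cnj z *s x \<in> L" using gm zG x by (auto simp: gmod_def)
      ultimately show "x \<in> (\<lambda>x. z *s x) ` L" by blast
    qed
  qed
  finally show ?thesis .
qed

lemma gmod_Ovec: "gmod Ovec" by (simp add: gmod_def Ovec_def)
lemma gmod_M0: "gmod M0"
  unfolding gmod_def M0_def by (auto simp: Ovec_iff pb_add pb_mult)

lemma Nalt_img_comp: "(*v) (Nalt a) ` ((*v) (Nalt b) ` X) = (*v) (Nalt (a @ b)) ` X"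
  by (simp add: img_comp Nalt_append)

lemma edges_part:
  assumes e: "e \<in> BT_edges" and e': "e' \<in> BT_edges"
  shows "\<exists>g\<in>Lam2. act_edge g e = e' \<and> (\<forall>h\<in>Lam2. act_edge h e = e' \<longrightarrow> pgu_eq g h)"
proof -
  obtain w1 where w1: "e = ((*v) (Nalt w1) ` Ovec, (*v) (Nalt w1) ` M0)" using edge_form[OF e] by blast
  obtain w2 where w2: "e' = ((*v) (Nalt w2) ` Ovec, (*v) (Nalt w2) ` M0)" using edge_form[OF e'] by blast
  define w where "w = w2 @ winv w1"
  define \<xi> where "\<xi> = (1 - \<i>) ^ cntT w"
  have xi: "unitDg \<xi>" by (simp add: \<xi>_def unitDg_power unitDg_pi)
  define g where "g = word_mat w"
  have gL: "g \<in> Lam2" by (simp add: g_def word_mat_Lam2)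
  have gf: "g = mat \<xi> ** Nalt w" by (simp add: g_def \<xi>_def word_mat_eq)
  have gmods: "gmod ((*v) (Nalt v) ` Ovec)" "gmod ((*v) (Nalt v) ` M0)" for v
    by (simp_all add: gmod_img gmod_Ovec gmod_M0)
  have cancel: "Nalt (w @ w1) = Nalt w2"
    by (simp add: w_def Nalt_append Nalt_inv matrix_mul_assoc[symmetric])
  have act: "act_edge g e = e'"
    unfolding act_edge_def gf w1 w2
    by (simp add: act_lat_eq[OF xi Nalt_Uset gmods(1)] act_lat_eq[OF xi Nalt_Uset gmods(2)] Nalt_img_comp cancel)
  have uniq: "pgu_eq g h" if hL: "h \<in> Lam2" and he: "act_edge h e = e'" for h
  proof -
    obtain \<eta> wh where eta: "unitDg \<eta>" and hf: "h = mat \<eta> ** Nalt wh" using Lam2_form[OF hL] by blast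
    have h1: "(*v) (Nalt (wh @ w1)) ` Ovec = (*v) (Nalt w2) ` Ovec"
      and h2: "(*v) (Nalt (wh @ w1)) ` M0 = (*v) (Nalt w2) ` M0"
      using he unfolding act_edge_def hf w1 w2
      by (simp_all add: act_lat_eq[OF eta Nalt_Uset gmods(1)] act_lat_eq[OF eta Nalt_Uset gmods(2)] Nalt_img_comp)
    have im: "(*v) (Nalt (winv w2 @ wh @ w1)) ` X = X"
      if hX: "(*v) (Nalt (wh @ w1)) ` X = (*v) (Nalt w2) ` X" for X
    proof -
      have "(*v) (Nalt (winv w2 @ wh @ w1)) ` X = (*v) (Nalt (winv w2)) ` ((*v) (Nalt (wh @ w1)) ` X)"
        by (simp only: Nalt_img_comp)
      also have "\<dots> = (*v) (Nalt (winv w2)) ` ((*v) (Nalt w2) ` X)" by (simp only: hX)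
      also have "\<dots> = X" by (simp only: img_comp Nalt_inv img_id)
      finally show ?thesis .
    qed
    have "(*v) (Nalt (winv w2 @ wh @ w1)) ` Ovec = Ovec" by (rule im[OF h1])
    moreover have "(*v) (Nalt (winv w2 @ wh @ w1)) ` M0 = M0" by (rule im[OF h2])
    ultimately have V: "Nalt (winv w2 @ wh @ w1) = mat 1" using fix_trivial by simp
    have "Nalt wh = Nalt w2 ** Nalt (winv w2 @ wh @ w1) ** Nalt (winv w1)"
      by (simp add: Nalt_append matrix_mul_assoc Nalt_inv2)
        (simp add: matrix_mul_assoc[symmetric] Nalt_inv2)
    then have "Nalt wh = Nalt w" using V by (simp add: w_def Nalt_append)
    have sc: "\<eta> * inverse \<xi> * \<xi> = \<eta>" using xi by (simp add: unitDg_def)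
    have "mat (\<eta> * inverse \<xi>) ** g = mat (\<eta> * inverse \<xi> * \<xi>) ** Nalt w"
      by (simp add: gf matrix_mul_assoc mat_mult_mat)
    then have "mat (\<eta> * inverse \<xi>) ** g = mat \<eta> ** Nalt w" by (simp only: sc)
    then have "h = mat (\<eta> * inverse \<xi>) ** g" using \<open>Nalt wh = Nalt w\<close> by (simp add: hf)
    moreover have "unitDg (\<eta> * inverse \<xi>)" by (rule unitDg_mult[OF eta unitDg_inverse[OF xi]])
    ultimately show ?thesis by (auto simp: pgu_eq_def)
  qed
  show ?thesis using gL act uniq by blast
qed




lemma unitZh_1: "unitZh 1" by (simp add: unitZh_def)
lemma unitZh_2: "unitZh 2"
proof -
  have "(2::real) \<in> dyadic" using dyadic_int[of 2] by simp
  moreover have "inverse (2::real) = 1/2" by simp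
  ultimately show ?thesis unfolding unitZh_def using dyadic_half by simp
qed

lemma sigma_GU3: "sigma3 \<in> GU3"
proof -
  have "\<forall>i j. sigma3 $ i $ j \<in> Gint" by (simp add: forall_3 sigma3_def)
  then have "\<forall>i j. sigma3 $ i $ j \<in> Dg" using Gint_Dg by blast
  moreover have "sigma3 ** mstar sigma3 = mat (complex_of_real 1)" using S_unit by simp
  ultimately show ?thesis unfolding GU3_def using unitZh_1 by blast
qed

lemma tau_GU3: "tau3 \<in> GU3"
proof -
  have "\<forall>i j. tau3 $ i $ j \<in> Gint" by (simp add: forall_3 tau3_def)
  then have "\<forall>i j. tau3 $ i $ j \<in> Dg" using Gint_Dg by blast
  moreover have "tau3 ** mstar tau3 = mat (complex_of_real 2)"
    by (simp add: mat_simps complex_eq_iff)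
  ultimately show ?thesis unfolding GU3_def using unitZh_2 by blast
qed

lemma sigma_triv: "pgu_trivial (mpow sigma3 3)"
  unfolding pgu_trivial_def using S3 unitDg_1 by blast

lemma tau_triv: "pgu_trivial (mpow tau3 3)"
proof -
  have "mpow tau3 3 = mat ((1 - \<i>) ^ 3)" by (simp add: mpow_tau3 T3)
  then show ?thesis unfolding pgu_trivial_def using unitDg_power[OF unitDg_pi(1)] by blast
qed

lemma word_part:
  assumes "w \<noteq> []" "alt_word w"
  shows "\<not> pgu_trivial (word_mat w)"
proof
  assume "pgu_trivial (word_mat w)"
  then obtain u where u: "unitDg u" "word_mat w = mat u" by (auto simp: pgu_trivial_def)
  define \<xi> where "\<xi> = (1 - \<i>) ^ cntT w"
  have xi: "unitDg \<xi>" by (simp add: \<xi>_def unitDg_power unitDg_pi)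
  have e: "mat \<xi> ** Nalt w = mat u" using u(2) by (simp add: word_mat_eq \<xi>_def)
  define \<zeta> where "\<zeta> = inverse \<xi> * u"
  have "Nalt w = mat (inverse \<xi>) ** (mat \<xi> ** Nalt w)"
    using xi by (simp add: matrix_mul_assoc mat_mult_mat unitDg_def)
  then have N: "Nalt w = mat \<zeta>" using e by (simp add: \<zeta>_def mat_mult_mat)
  have zD: "\<zeta> \<in> Dg" using xi u(1) by (simp add: \<zeta>_def unitDg_def)
  have "mat \<zeta> ** mstar (mat \<zeta>) = mat 1" using Nalt_Uset[of w] N by (simp add: Uset_def)
  then have "\<zeta> * cnj \<zeta> = 1" by (simp add: mstar_mat mat_mult_mat mat_inj)
  then have "complex_of_real ((cmod \<zeta>)^2) = 1" by (simp only: complex_norm_square)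
  then have "(cmod \<zeta>)^2 = 1" by (metis of_real_1 of_real_eq_iff)
  then have "cmod \<zeta> = 1" using norm_ge_zero[of \<zeta>] by (simp add: power2_eq_1_iff)
  then have "\<zeta> \<in> Gint" using Dg_norm1_Gint zD by blast
  then show False using no_scalar[OF assms(2,1)] N by blast
qed

theorem proposition6p2:
  shows "sigma3 \<in> GU3 \<and> tau3 \<in> GU3 \<and>
    (\<forall>e\<in>BT_edges. \<forall>e'\<in>BT_edges. \<exists>g\<in>Lam2. act_edge g e = e' \<and>
        (\<forall>h\<in>Lam2. act_edge h e = e' \<longrightarrow> pgu_eq g h)) \<and>
    pgu_trivial (mpow sigma3 3) \<and> pgu_trivial (mpow tau3 3) \<and>
    (\<forall>w. w \<noteq> [] \<and> alt_word w \<longrightarrow> \<not> pgu_trivial (word_mat w))"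
  using sigma_GU3 tau_GU3 edges_part sigma_triv tau_triv word_part by blast


end
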